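(* Let $d\ge2$, $\mathbf X\in\mathbb R^d$ elliptical with positive definite covariance $\boldsymbol\Sigma=\mathbf V\boldsymbol\Lambda\mathbf V'$, $\mathbf Y=\mathbf V'\mathbf X$, $\alpha\in(0,1)$, and for $i\in\{1,\dots,d\}$ let $\boldsymbol\Lambda_{i,\alpha}:=\mathrm{Cov}(\mathbf Y\mid Y_i\in\mathsf T^\alpha_{Y_i})$. Then: (1) $\|\boldsymbol\Lambda_{1,\alpha}\|_F\le\|\boldsymbol\Lambda_{i,\alpha}\|_F\le\|\boldsymbol\Lambda_{d,\alpha}\|_F$ for all $i$; (2) $\det(\boldsymbol\Lambda_{i,\alpha})$ is the same for all $i\in\{1,\dots,d\}$; (3) $\|\boldsymbol\Lambda_{1,\alpha}\|_{\mathrm{op}}\le\|\boldsymbol\Lambda_{i,\alpha}\|_{\mathrm{op}}$ for all $i$, and $\|\boldsymbol\Lambda_{i,\alpha}\|_{\mathrm{op}}$ takes the same value for all $i\in\{2,\dots,d\}$.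
   Context: A random vector $\mathbf X\in\mathbb R^d$ belongs to the elliptical family with parameters $(\boldsymbol\mu,\boldsymbol\Sigma,\phi)$ if its characteristic function is $\mathbb E[e^{i\mathbf t'\mathbf X}]=e^{i\mathbf t'\boldsymbol\mu}\phi(\mathbf t'\boldsymbol\Sigma\mathbf t)$ for all $\mathbf t\in\mathbb R^d$, for some scalar function $\phi$; here $\mathbf X$ is assumed to have finite second moments and covariance matrix $\boldsymbol\Sigma$, positive definite, and the conditioning events have positive probability. Spectral decomposition: $\boldsymbol\Sigma=\mathbf V\boldsymbol\Lambda\mathbf V'$ with $\mathbf V$ orthogonal (orthonormal eigenvectors as columns) and $\boldsymbol\Lambda=\mathrm{diag}(\lambda_1,\dots,\lambda_d)$, $\lambda_1\ge\cdots\ge\lambda_d>0$. For a real random variable $W$, $Q_W(p)=\inf\{x:\mathbb P(W\le x)\ge p\}$ and $\mathsf T^\alpha_W:=[Q_W(\alpha/2),Q_W(1-\alpha/2)]$. $\|\cdot\|_F$ is the Frobenius norm, $\|\cdot\|_{\mathrm{op}}$ the operator norm. *)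

theory Defs
  imports "HOL-Probability.Probability"
begin

definition quantile :: "'a measure \<Rightarrow> ('a \<Rightarrow> real) \<Rightarrow> real \<Rightarrow> real" where
  "quantile M W p = Inf {x. measure M {\<omega> \<in> space M. W \<omega> \<le> x} \<ge> p}"

definition central_interval :: "'a measure \<Rightarrow> ('a \<Rightarrow> real) \<Rightarrow> real \<Rightarrow> real set" where
  "central_interval M W \<alpha> = {quantile M W (\<alpha>/2) .. quantile M W (1 - \<alpha>/2)}"

definition cond_exp_event :: "'a measure \<Rightarrow> 'a set \<Rightarrow> ('a \<Rightarrow> real) \<Rightarrow> real" where
  "cond_exp_event M A Z = (\<integral>\<omega>. indicator A \<omega> * Z \<omega> \<partial>M) / measure M A"

definition cov_matrix :: "'a measure \<Rightarrow> ('a \<Rightarrow> real^'d) \<Rightarrow> real^'d^'d" where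
  "cov_matrix M X = (\<chi> j k. (\<integral>\<omega>. (X \<omega> $ j - (\<integral>\<omega>'. X \<omega>' $ j \<partial>M))
                                   * (X \<omega> $ k - (\<integral>\<omega>'. X \<omega>' $ k \<partial>M)) \<partial>M))"

definition cond_cov_matrix :: "'a measure \<Rightarrow> 'a set \<Rightarrow> ('a \<Rightarrow> real^'d) \<Rightarrow> real^'d^'d" where
  "cond_cov_matrix M A Y = (\<chi> j k. cond_exp_event M A
      (\<lambda>\<omega>. (Y \<omega> $ j - cond_exp_event M A (\<lambda>\<omega>'. Y \<omega>' $ j))
          * (Y \<omega> $ k - cond_exp_event M A (\<lambda>\<omega>'. Y \<omega>' $ k))))"

definition elliptical :: "'a measure \<Rightarrow> ('a \<Rightarrow> real^'d) \<Rightarrow> real^'d \<Rightarrow> real^'d^'d \<Rightarrow> (real \<Rightarrow> complex) \<Rightarrow> bool" where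
  "elliptical M X \<mu> \<Sigma> \<phi> \<longleftrightarrow>
     (\<forall>t. (\<integral>\<omega>. cis (t \<bullet> X \<omega>) \<partial>M) = cis (t \<bullet> \<mu>) * \<phi> (t \<bullet> (\<Sigma> *v t)))"

definition frob_norm :: "real^'n^'m \<Rightarrow> real" where
  "frob_norm A = sqrt (\<Sum>i\<in>UNIV. \<Sum>j\<in>UNIV. (A $ i $ j)\<^sup>2)"

definition op_norm :: "real^'n^'m \<Rightarrow> real" where
  "op_norm A = onorm (\<lambda>x. A *v x)"

end

theory Submission
  imports Defs "HOL-Real_Asymp.Real_Asymp"
begin

lemma weighted_unique:
  fixes M :: "'a measure" and U U' h h' :: "'a \<Rightarrow> real" and g :: "real \<Rightarrow> real"
  assumes P: "prob_space M"
  and U: "U \<in> borel_measurable M" and U': "U' \<in> borel_measurable M"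
  and h: "h \<in> borel_measurable M" "\<And>\<omega>. 0 \<le> h \<omega>" "\<And>\<omega>. h \<omega> \<le> B"
  and h': "h' \<in> borel_measurable M" "\<And>\<omega>. 0 \<le> h' \<omega>" "\<And>\<omega>. h' \<omega> \<le> B"
  and c: "(\<integral>\<omega>. h \<omega> \<partial>M) = c" "(\<integral>\<omega>. h' \<omega> \<partial>M) = c" "c > 0"
  and ch: "\<And>u. (\<integral>\<omega>. h \<omega> *\<^sub>R iexp (u * U \<omega>) \<partial>M) = (\<integral>\<omega>. h' \<omega> *\<^sub>R iexp (u * U' \<omega>) \<partial>M)"
  and g: "g \<in> borel_measurable borel" "\<And>x. \<bar>g x\<bar> \<le> K"
  shows "(\<integral>\<omega>. h \<omega> * g (U \<omega>) \<partial>M) = (\<integral>\<omega>. h' \<omega> * g (U' \<omega>) \<partial>M)"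
proof -
  interpret prob_space M by fact
  have gen: "real_distribution (distr (density M (\<lambda>\<omega>. ennreal (k \<omega> / c))) borel V)
     \<and> (\<forall>u. char (distr (density M (\<lambda>\<omega>. ennreal (k \<omega> / c))) borel V) u
           = (\<integral>\<omega>. k \<omega> *\<^sub>R iexp (u * V \<omega>) \<partial>M) / c)
     \<and> integral\<^sup>L (distr (density M (\<lambda>\<omega>. ennreal (k \<omega> / c))) borel V) g
           = (\<integral>\<omega>. k \<omega> * g (V \<omega>) \<partial>M) / c"
    if V: "V \<in> borel_measurable M" and k: "k \<in> borel_measurable M" "\<And>\<omega>. 0 \<le> k \<omega>" "\<And>\<omega>. k \<omega> \<le> B"
      and kc: "(\<integral>\<omega>. k \<omega> \<partial>M) = c" for k V
  proof (intro conjI allI)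
    have ik: "integrable M k"
      using k by (intro integrable_const_bound[where B=B]) auto
    have "emeasure (density M (\<lambda>\<omega>. ennreal (k \<omega> / c))) (space M) = 1"
    proof -
      have "emeasure (density M (\<lambda>\<omega>. ennreal (k \<omega> / c))) (space M)
          = (\<integral>\<^sup>+\<omega>. ennreal (k \<omega> / c) \<partial>M)"
        using k by (subst emeasure_density) auto
      also have "\<dots> = ennreal (\<integral>\<omega>. k \<omega> / c \<partial>M)"
        using k ik c by (intro nn_integral_eq_integral) auto
      also have "(\<integral>\<omega>. k \<omega> / c \<partial>M) = 1" using kc c by simp
      finally show ?thesis by simp
    qed
    then have ps: "prob_space (density M (\<lambda>\<omega>. ennreal (k \<omega> / c)))"
      by (intro prob_spaceI) simp
    show "real_distribution (distr (density M (\<lambda>\<omega>. ennreal (k \<omega> / c))) borel V)"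
      using V by (intro prob_space.real_distribution_distr[OF ps]) simp
    fix u
    show "char (distr (density M (\<lambda>\<omega>. ennreal (k \<omega> / c))) borel V) u
           = (\<integral>\<omega>. k \<omega> *\<^sub>R iexp (u * V \<omega>) \<partial>M) / c"
      unfolding char_def using V k c
      apply (subst integral_distr)
        apply simp
       apply simp
      apply (subst integral_density)
         apply (auto simp: comp_def)
      apply (subst integral_divide_zero[symmetric])
      apply (rule Bochner_Integration.integral_cong)
       apply (auto simp: scaleR_conv_of_real)
      done
    show "integral\<^sup>L (distr (density M (\<lambda>\<omega>. ennreal (k \<omega> / c))) borel V) g
           = (\<integral>\<omega>. k \<omega> * g (V \<omega>) \<partial>M) / c"
      using V k c g
      apply (subst integral_distr)
        apply simp
       apply simp
      apply (subst integral_density)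
         apply (auto simp: comp_def)
      done
  qed
  note g1 = gen[OF U h c(1)] and g2 = gen[OF U' h' c(2)]
  have "char (distr (density M (\<lambda>\<omega>. ennreal (h \<omega> / c))) borel U)
      = char (distr (density M (\<lambda>\<omega>. ennreal (h' \<omega> / c))) borel U')"
    using g1 g2 ch by auto
  then have "distr (density M (\<lambda>\<omega>. ennreal (h \<omega> / c))) borel U
      = distr (density M (\<lambda>\<omega>. ennreal (h' \<omega> / c))) borel U'"
    using g1 g2 by (intro Levy_uniqueness) auto
  then have "(\<integral>\<omega>. h \<omega> * g (U \<omega>) \<partial>M) / c = (\<integral>\<omega>. h' \<omega> * g (U' \<omega>) \<partial>M) / c"
    using g1 g2 by metis
  then show ?thesis using c by simp
qed

lemma sinlim: "(\<lambda>n. sin (x / real (Suc n)) * real (Suc n)) \<longlonglongrightarrow> x"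
  by real_asymp

lemma sinlim2: "(\<lambda>n. sin (x / (2 * real (Suc n))) * (2 * real (Suc n))) \<longlonglongrightarrow> x"
  by real_asymp

lemma bnd1: "\<bar>a\<bar> \<le> 1 \<Longrightarrow> \<bar>b\<bar> \<le> K \<Longrightarrow> \<bar>a * b\<bar> \<le> (K::real)"
  by (simp add: abs_mult) (meson abs_ge_zero dual_order.trans mult_left_le_one_le)

lemma sin_scaled_bound: "(m::real) > 0 \<Longrightarrow> \<bar>sin (x / m) * m\<bar> \<le> \<bar>x\<bar>"
  using abs_sin_x_le_abs_x[of "x/m"] by (simp add: abs_mult le_divide_eq)

locale sph = prob_space M for M :: "'a measure" +
  fixes Z :: "'a \<Rightarrow> real^'d" and \<phi> :: "real \<Rightarrow> complex"
  assumes Zm[measurable]: "Z \<in> borel_measurable M"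
  and chZ: "\<And>t. (\<integral>\<omega>. iexp (t \<bullet> Z \<omega>) \<partial>M) = \<phi> (t \<bullet> t)"
  and Z2: "\<And>j. integrable M (\<lambda>\<omega>. (Z \<omega> $ j)\<^sup>2)"
begin

lemma Zi_meas[measurable]: "(\<lambda>\<omega>. Z \<omega> $ i) \<in> borel_measurable M"
  using measurable_compose[OF Zm, of "\<lambda>x. x $ i" borel]
  by (simp add: borel_measurable_continuous_onI continuous_on_component continuous_on_id)

lemma inner_meas[measurable]: "(\<lambda>\<omega>. t \<bullet> Z \<omega>) \<in> borel_measurable M"
  by measurable

lemma int_iexp: "integrable M (\<lambda>\<omega>. iexp (f \<omega>))" if "f \<in> borel_measurable M" for f
  using that by (intro integrable_const_bound[where B=1]) (auto simp: norm_exp_i_times)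

lemma ax_inner: "(u *\<^sub>R axis i 1 + t) \<bullet> Z \<omega> = u * Z \<omega> $ i + t \<bullet> Z \<omega>"
  by (simp add: inner_add_left inner_axis')

lemma ax_norm: "(t::real^'d) $ i = 0 \<Longrightarrow> (u *\<^sub>R axis i 1 + t) \<bullet> (u *\<^sub>R axis i 1 + t) = u * u + t \<bullet> t"
  by (simp add: inner_add_left inner_add_right inner_axis inner_axis' real_inner_1_right)

lemma ch1: "t $ i = 0 \<Longrightarrow> (\<integral>\<omega>. iexp (u * Z \<omega> $ i + t \<bullet> Z \<omega>) \<partial>M) = \<phi> (u * u + t \<bullet> t)"
  using chZ[of "u *\<^sub>R axis i 1 + t"] by (simp add: ax_inner ax_norm)

lemma alg1: "(2 + (B + C)/2) * A = 2*A + (A*B + A*C)/(2::complex)"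
  by (simp add: field_simps)
lemma alg2: "(2 + (B - C)/(2*\<i>)) * A = 2*A + (A*B - A*C)/(2*\<i>)"
  by (simp add: field_simps)
lemma cos_iexp: "complex_of_real ((2 + cos y)) * iexp x
   = 2 * iexp x + (iexp (x + y) + iexp (x + (- y))) / 2"
proof -
  have c: "complex_of_real (cos y) = (iexp y + iexp (-y))/2"
    by (simp add: cos_of_real[symmetric] cos_exp_eq)
  have a: "iexp (x + y) = iexp x * iexp y" "iexp (x + - y) = iexp x * iexp (- y)"
    by (simp_all add: exp_add[symmetric] distrib_left right_diff_distrib)
  have "complex_of_real (2 + cos y) * iexp x = (2 + (iexp y + iexp (-y))/2) * iexp x"
    by (simp only: of_real_add c of_real_numeral)
  also have "\<dots> = 2 * iexp x + (iexp x * iexp y + iexp x * iexp (-y))/2" by (rule alg1)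
  finally show ?thesis by (simp only: a)
qed
lemma sin_iexp: "complex_of_real ((2 + sin y)) * iexp x
   = 2 * iexp x + (iexp (x + y) - iexp (x + (- y))) / (2 * \<i>)"
proof -
  have c: "complex_of_real (sin y) = (iexp y - iexp (-y))/(2 * \<i>)"
    by (simp add: sin_of_real[symmetric] sin_exp_eq)
  have a: "iexp (x + y) = iexp x * iexp y" "iexp (x + - y) = iexp x * iexp (- y)"
    by (simp_all add: exp_add[symmetric] distrib_left right_diff_distrib)
  have "complex_of_real (2 + sin y) * iexp x = (2 + (iexp y - iexp (-y))/(2 * \<i>)) * iexp x"
    by (simp only: of_real_add c of_real_numeral)
  also have "\<dots> = 2 * iexp x + (iexp x * iexp y - iexp x * iexp (-y))/(2 * \<i>)" by (rule alg2)
  finally show ?thesis by (simp only: a)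
qed

lemma ch0: "(\<integral>\<omega>. iexp (u * Z \<omega> $ i) \<partial>M) = \<phi> (u * u)"
  using ch1[of 0 i u] by simp

lemma char_cos:
  assumes "t $ i = 0"
  shows "(\<integral>\<omega>. (2 + cos (t \<bullet> Z \<omega>)) *\<^sub>R iexp (u * Z \<omega> $ i) \<partial>M) = 2 * \<phi> (u * u) + \<phi> (u * u + t \<bullet> t)"
proof -
  have IA: "integrable M (\<lambda>\<omega>. iexp (u * Z \<omega> $ i))" by (rule int_iexp) measurable
  have IB: "integrable M (\<lambda>\<omega>. iexp (u * Z \<omega> $ i + t \<bullet> Z \<omega>))" by (rule int_iexp) measurable
  have IC: "integrable M (\<lambda>\<omega>. iexp (u * Z \<omega> $ i + (-t) \<bullet> Z \<omega>))" by (rule int_iexp) measurable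
  have "(\<integral>\<omega>. (2 + cos (t \<bullet> Z \<omega>)) *\<^sub>R iexp (u * Z \<omega> $ i) \<partial>M)
     = (\<integral>\<omega>. 2 * iexp (u * Z \<omega> $ i) + (iexp (u * Z \<omega> $ i + t \<bullet> Z \<omega>) + iexp (u * Z \<omega> $ i + (-t) \<bullet> Z \<omega>)) / 2 \<partial>M)"
    by (rule Bochner_Integration.integral_cong[OF refl]) (simp only: scaleR_conv_of_real cos_iexp inner_minus_left)
  also have "\<dots> = 2 * (\<integral>\<omega>. iexp (u * Z \<omega> $ i) \<partial>M) + ((\<integral>\<omega>. iexp (u * Z \<omega> $ i + t \<bullet> Z \<omega>) \<partial>M) + (\<integral>\<omega>. iexp (u * Z \<omega> $ i + (-t) \<bullet> Z \<omega>) \<partial>M)) / 2"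
    using IA IB IC by (simp only: Bochner_Integration.integral_add Bochner_Integration.integral_diff integrable_mult_right integrable_divide
         Bochner_Integration.integrable_add Bochner_Integration.integrable_diff integral_mult_right_zero integral_divide_zero)
  also have "\<dots> = 2 * \<phi> (u * u) + \<phi> (u * u + t \<bullet> t)"
    using ch1[of t i u] ch1[of "-t" i u] ch0[of u i] assms by simp
  finally show ?thesis .
qed

lemma char_sin:
  assumes "t $ i = 0"
  shows "(\<integral>\<omega>. (2 + sin (t \<bullet> Z \<omega>)) *\<^sub>R iexp (u * Z \<omega> $ i) \<partial>M) = 2 * \<phi> (u * u)"
proof -
  have IA: "integrable M (\<lambda>\<omega>. iexp (u * Z \<omega> $ i))" by (rule int_iexp) measurable
  have IB: "integrable M (\<lambda>\<omega>. iexp (u * Z \<omega> $ i + t \<bullet> Z \<omega>))" by (rule int_iexp) measurable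
  have IC: "integrable M (\<lambda>\<omega>. iexp (u * Z \<omega> $ i + (-t) \<bullet> Z \<omega>))" by (rule int_iexp) measurable
  have "(\<integral>\<omega>. (2 + sin (t \<bullet> Z \<omega>)) *\<^sub>R iexp (u * Z \<omega> $ i) \<partial>M)
     = (\<integral>\<omega>. 2 * iexp (u * Z \<omega> $ i) + (iexp (u * Z \<omega> $ i + t \<bullet> Z \<omega>) - iexp (u * Z \<omega> $ i + (-t) \<bullet> Z \<omega>)) / (2 * \<i>) \<partial>M)"
    by (rule Bochner_Integration.integral_cong[OF refl]) (simp only: scaleR_conv_of_real sin_iexp inner_minus_left)
  also have "\<dots> = 2 * (\<integral>\<omega>. iexp (u * Z \<omega> $ i) \<partial>M) + ((\<integral>\<omega>. iexp (u * Z \<omega> $ i + t \<bullet> Z \<omega>) \<partial>M) - (\<integral>\<omega>. iexp (u * Z \<omega> $ i + (-t) \<bullet> Z \<omega>) \<partial>M)) / (2 * \<i>)"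
    using IA IB IC by (simp only: Bochner_Integration.integral_add Bochner_Integration.integral_diff integrable_mult_right integrable_divide
         Bochner_Integration.integrable_add Bochner_Integration.integrable_diff integral_mult_right_zero integral_divide_zero)
  also have "\<dots> = 2 * \<phi> (u * u)"
    using ch1[of t i u] ch1[of "-t" i u] ch0[of u i] assms by simp
  finally show ?thesis .
qed

lemma intb: "f \<in> borel_measurable M \<Longrightarrow> (\<And>\<omega>. \<bar>f \<omega>\<bar> \<le> B) \<Longrightarrow> integrable M f"
  for f :: "'a \<Rightarrow> real"
  by (intro integrable_const_bound[where B=B]) auto

lemma c_cos: "t $ i = 0 \<Longrightarrow> complex_of_real (\<integral>\<omega>. 2 + cos (t \<bullet> Z \<omega>) \<partial>M) = 2 * \<phi> 0 + \<phi> (t \<bullet> t)"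
proof -
  assume ti: "t $ i = 0"
  have "(\<integral>\<omega>. (2 + cos (t \<bullet> Z \<omega>)) *\<^sub>R iexp (0 * Z \<omega> $ i) \<partial>M) = complex_of_real (\<integral>\<omega>. 2 + cos (t \<bullet> Z \<omega>) \<partial>M)"
    by (simp only: mult_zero_left of_real_0 mult_zero_right exp_zero scaleR_conv_of_real mult_1_right integral_complex_of_real)
  then show ?thesis using char_cos[OF ti, of 0] by simp
qed

lemma cos_b: "\<bar>2 + cos (x::real)\<bar> \<le> 3" "0 \<le> 2 + cos x" "2 + cos x \<le> 3" "1 \<le> 2 + cos x"
  and sin_b: "\<bar>2 + sin (x::real)\<bar> \<le> 3" "0 \<le> 2 + sin x" "2 + sin x \<le> 3"
  using cos_ge_minus_one[of x] cos_le_one[of x] sin_ge_minus_one[of x] sin_le_one[of x] by linarith+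

lemma phi0: "\<phi> 0 = 1"
  using chZ[of 0] by (simp add: prob_space)

lemma c_pos: "(\<integral>\<omega>. 2 + cos (t \<bullet> Z \<omega>) \<partial>M) > 0"
proof -
  have "1 \<le> (\<integral>\<omega>. 2 + cos (t \<bullet> Z \<omega>) \<partial>M)"
    by (rule integral_ge_const, rule intb[where B=3]) (auto simp: cos_b)
  then show ?thesis by simp
qed

lemma KC:
  fixes g :: "real \<Rightarrow> real"
  assumes ti: "t $ i = 0" and ti': "t' $ i' = 0" and tt: "t \<bullet> t = t' \<bullet> t'"
    and g: "g \<in> borel_measurable borel" "\<And>x. \<bar>g x\<bar> \<le> K"
  shows "(\<integral>\<omega>. (2 + cos (t \<bullet> Z \<omega>)) * g (Z \<omega> $ i) \<partial>M) = (\<integral>\<omega>. (2 + cos (t' \<bullet> Z \<omega>)) * g (Z \<omega> $ i') \<partial>M)"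
proof (rule weighted_unique[OF prob_space_axioms, where B=3 and c="\<integral>\<omega>. 2 + cos (t \<bullet> Z \<omega>) \<partial>M"
     and h="\<lambda>\<omega>. 2 + cos (t \<bullet> Z \<omega>)" and h'="\<lambda>\<omega>. 2 + cos (t' \<bullet> Z \<omega>)"
     and U="\<lambda>\<omega>. Z \<omega> $ i" and U'="\<lambda>\<omega>. Z \<omega> $ i'" and g=g and K=K])
  show "(\<integral>\<omega>. 2 + cos (t' \<bullet> Z \<omega>) \<partial>M) = (\<integral>\<omega>. 2 + cos (t \<bullet> Z \<omega>) \<partial>M)"
    using c_cos[OF ti] c_cos[OF ti'] tt by (metis of_real_eq_iff)
  show "\<And>u. (\<integral>\<omega>. (2 + cos (t \<bullet> Z \<omega>)) *\<^sub>R iexp (u * Z \<omega> $ i) \<partial>M) = (\<integral>\<omega>. (2 + cos (t' \<bullet> Z \<omega>)) *\<^sub>R iexp (u * Z \<omega> $ i') \<partial>M)"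
    using char_cos[OF ti] char_cos[OF ti'] tt by simp
qed (use g c_pos in \<open>auto simp: cos_b\<close>)

lemma KS:
  fixes g :: "real \<Rightarrow> real"
  assumes ti: "t $ i = 0"
    and g: "g \<in> borel_measurable borel" "\<And>x. \<bar>g x\<bar> \<le> K"
  shows "(\<integral>\<omega>. (2 + sin (t \<bullet> Z \<omega>)) * g (Z \<omega> $ i) \<partial>M) = (\<integral>\<omega>. 2 * g (Z \<omega> $ i) \<partial>M)"
proof (rule weighted_unique[OF prob_space_axioms, where B=3 and c=2
     and h="\<lambda>\<omega>. 2 + sin (t \<bullet> Z \<omega>)" and h'="\<lambda>\<omega>. 2"
     and U="\<lambda>\<omega>. Z \<omega> $ i" and U'="\<lambda>\<omega>. Z \<omega> $ i" and g=g and K=K])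
  have "(\<integral>\<omega>. (2 + sin (t \<bullet> Z \<omega>)) *\<^sub>R iexp (0 * Z \<omega> $ i) \<partial>M) = complex_of_real (\<integral>\<omega>. 2 + sin (t \<bullet> Z \<omega>) \<partial>M)"
    by (simp only: mult_zero_left of_real_0 mult_zero_right exp_zero scaleR_conv_of_real mult_1_right integral_complex_of_real)
  then have "complex_of_real (\<integral>\<omega>. 2 + sin (t \<bullet> Z \<omega>) \<partial>M) = complex_of_real 2"
    using char_sin[OF ti, of 0] by (simp add: phi0)
  then show "(\<integral>\<omega>. 2 + sin (t \<bullet> Z \<omega>) \<partial>M) = 2"
    by (simp only: of_real_eq_iff)
  show "\<And>u. (\<integral>\<omega>. (2 + sin (t \<bullet> Z \<omega>)) *\<^sub>R iexp (u * Z \<omega> $ i) \<partial>M) = (\<integral>\<omega>. 2 *\<^sub>R iexp (u * Z \<omega> $ i) \<partial>M)"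
    using char_sin[OF ti] ch0 by (simp add: scaleR_conv_of_real)
qed (use g in \<open>auto simp: sin_b prob_space\<close>)

lemma Fsym:
  fixes g :: "real \<Rightarrow> real"
  assumes g: "g \<in> borel_measurable borel" "\<And>x. \<bar>g x\<bar> \<le> K"
  shows "(\<integral>\<omega>. g (Z \<omega> $ i) \<partial>M) = (\<integral>\<omega>. g (- Z \<omega> $ i) \<partial>M)"
proof -
  have "(\<integral>\<omega>. 1 * g (Z \<omega> $ i) \<partial>M) = (\<integral>\<omega>. 1 * g (- Z \<omega> $ i) \<partial>M)"
  proof (rule weighted_unique[OF prob_space_axioms, where B=1 and c=1
     and h="\<lambda>\<omega>. 1" and h'="\<lambda>\<omega>. 1"
     and U="\<lambda>\<omega>. Z \<omega> $ i" and U'="\<lambda>\<omega>. - Z \<omega> $ i" and g=g and K=K])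
    show "\<And>u. (\<integral>\<omega>. 1 *\<^sub>R iexp (u * Z \<omega> $ i) \<partial>M) = (\<integral>\<omega>. 1 *\<^sub>R iexp (u * - Z \<omega> $ i) \<partial>M)"
      using ch0 ch0[of "- _" i] by simp
  qed (use g in \<open>auto simp: prob_space\<close>)
  then show ?thesis by simp
qed

lemma gZ_meas[measurable]: "(g::real\<Rightarrow>real) \<in> borel_measurable borel \<Longrightarrow> (\<lambda>\<omega>. g (Z \<omega> $ i)) \<in> borel_measurable M"
  by (rule measurable_compose[OF Zi_meas])

lemma int_gZ: "(g::real\<Rightarrow>real) \<in> borel_measurable borel \<Longrightarrow> (\<And>x. \<bar>g x\<bar> \<le> K) \<Longrightarrow> integrable M (\<lambda>\<omega>. g (Z \<omega> $ i))"
  by (rule intb[where B=K]) auto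

lemma int_cgZ: "(g::real\<Rightarrow>real) \<in> borel_measurable borel \<Longrightarrow> (\<And>x. \<bar>g x\<bar> \<le> K) \<Longrightarrow> f \<in> borel_measurable M \<Longrightarrow> (\<And>\<omega>. \<bar>f \<omega>\<bar> \<le> 1)
   \<Longrightarrow> integrable M (\<lambda>\<omega>. f \<omega> * g (Z \<omega> $ i))"
  by (rule intb[where B=K]) (auto intro: bnd1)

lemma split_lin:
  fixes f c :: "'a \<Rightarrow> real"
  assumes "integrable M f" "integrable M (\<lambda>\<omega>. c \<omega> * f \<omega>)"
  shows "(\<integral>\<omega>. (a + c \<omega>) * f \<omega> \<partial>M) = a * (\<integral>\<omega>. f \<omega> \<partial>M) + (\<integral>\<omega>. c \<omega> * f \<omega> \<partial>M)"
proof -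
  have "(\<integral>\<omega>. (a + c \<omega>) * f \<omega> \<partial>M) = (\<integral>\<omega>. a * f \<omega> + c \<omega> * f \<omega> \<partial>M)"
    by (simp add: distrib_right)
  also have "\<dots> = (\<integral>\<omega>. a * f \<omega> \<partial>M) + (\<integral>\<omega>. c \<omega> * f \<omega> \<partial>M)"
    using assms by (intro Bochner_Integration.integral_add) auto
  finally show ?thesis by simp
qed

lemma F4:
  fixes g :: "real \<Rightarrow> real"
  assumes g: "g \<in> borel_measurable borel" "\<And>x. \<bar>g x\<bar> \<le> K"
  shows "(\<integral>\<omega>. g (Z \<omega> $ i) \<partial>M) = (\<integral>\<omega>. g (Z \<omega> $ i') \<partial>M)"
  using KC[of 0 i 0 i' g K, OF _ _ _ g] by simp

lemma Fcos:
  fixes g :: "real \<Rightarrow> real"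
  assumes ti: "t $ i = 0" and ti': "t' $ i' = 0" and tt: "t \<bullet> t = t' \<bullet> t'"
    and g: "g \<in> borel_measurable borel" "\<And>x. \<bar>g x\<bar> \<le> K"
  shows "(\<integral>\<omega>. cos (t \<bullet> Z \<omega>) * g (Z \<omega> $ i) \<partial>M) = (\<integral>\<omega>. cos (t' \<bullet> Z \<omega>) * g (Z \<omega> $ i') \<partial>M)"
proof -
  have "(\<integral>\<omega>. (2 + cos (s \<bullet> Z \<omega>)) * g (Z \<omega> $ j) \<partial>M) = 2 * (\<integral>\<omega>. g (Z \<omega> $ j) \<partial>M) + (\<integral>\<omega>. cos (s \<bullet> Z \<omega>) * g (Z \<omega> $ j) \<partial>M)" for s j
    by (rule split_lin, rule int_gZ[OF g], rule int_cgZ[OF g]) auto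
  then show ?thesis using KC[OF ti ti' tt g] F4[OF g, of i i'] by simp
qed

lemma Fsin:
  fixes g :: "real \<Rightarrow> real"
  assumes ti: "t $ i = 0"
    and g: "g \<in> borel_measurable borel" "\<And>x. \<bar>g x\<bar> \<le> K"
  shows "(\<integral>\<omega>. sin (t \<bullet> Z \<omega>) * g (Z \<omega> $ i) \<partial>M) = 0"
proof -
  have "(\<integral>\<omega>. (2 + sin (t \<bullet> Z \<omega>)) * g (Z \<omega> $ i) \<partial>M) = 2 * (\<integral>\<omega>. g (Z \<omega> $ i) \<partial>M) + (\<integral>\<omega>. sin (t \<bullet> Z \<omega>) * g (Z \<omega> $ i) \<partial>M)"
    by (rule split_lin, rule int_gZ[OF g], rule int_cgZ[OF g]) auto
  then show ?thesis using KS[OF ti g] by simp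
qed

lemma dc:
  fixes s :: "nat \<Rightarrow> 'a \<Rightarrow> real"
  assumes "f \<in> borel_measurable M" "\<And>n. s n \<in> borel_measurable M" "integrable M w"
    "\<And>\<omega>. (\<lambda>n. s n \<omega>) \<longlonglongrightarrow> f \<omega>" "\<And>n \<omega>. \<bar>s n \<omega>\<bar> \<le> w \<omega>"
  shows "(\<lambda>n. \<integral>\<omega>. s n \<omega> \<partial>M) \<longlonglongrightarrow> (\<integral>\<omega>. f \<omega> \<partial>M)"
  by (rule integral_dominated_convergence[where w=w, OF assms(1,2,3)])
     (auto intro!: AE_I2 simp: assms(4) assms(5))

lemma Zint: "integrable M (\<lambda>\<omega>. Z \<omega> $ j)"
  by (rule square_integrable_imp_integrable[OF Zi_meas Z2])

end

lemma ab: "\<bar>a\<bar> * \<bar>b\<bar> \<le> a\<^sup>2 + (b::real)\<^sup>2"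
proof -
  have "0 \<le> (\<bar>a\<bar> - \<bar>b\<bar>)\<^sup>2" by simp
  then have "2 * (\<bar>a\<bar> * \<bar>b\<bar>) \<le> a\<^sup>2 + b\<^sup>2" by (simp add: power2_eq_square algebra_simps)
  moreover have "0 \<le> \<bar>a\<bar> * \<bar>b\<bar>" by simp
  ultimately show ?thesis by linarith
qed
lemma ss: "sin a * m * (sin b * m) * G = m*m/2*(cos(a-b)*G - cos(a+b)*(G::real))"
  by (simp add: sin_times_sin field_simps)
lemma axn: "j \<noteq> k \<Longrightarrow> (axis j 1 - axis k 1 :: real^'d) \<bullet> (axis j 1 - axis k 1) = 2"
  "j \<noteq> k \<Longrightarrow> (axis j 1 + axis k 1 :: real^'d) \<bullet> (axis j 1 + axis k 1) = 2"
  by (simp_all add: inner_diff_left inner_diff_right inner_add_left inner_add_right inner_axis_axis)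
lemma pw0: "C = 1 - 2 * S\<^sup>2 \<Longrightarrow> (S * (2 * m))\<^sup>2 = 2 * m\<^sup>2 * (1 - (C::real))"
  by (hypsubst, simp add: power_mult_distrib algebra_simps)
lemma pw: "(sin (x / (2 * real (Suc n))) * (2 * real (Suc n)))\<^sup>2 = 2 * (real (Suc n))\<^sup>2 * (1 - cos (x / real (Suc n)))"
proof -
  have "cos (x / real (Suc n)) = cos (2 * (x / (2 * real (Suc n))))" by (rule arg_cong[where f=cos]) (simp add: field_simps)
  also have "\<dots> = 1 - 2 * (sin (x / (2 * real (Suc n))))\<^sup>2" by (rule cos_double_sin)
  finally show ?thesis by (rule pw0)
qed
context sph begin
lemma F1:
  fixes g :: "real \<Rightarrow> real"
  assumes ij: "i \<noteq> j" and g: "g \<in> borel_measurable borel" "\<And>x. \<bar>g x\<bar> \<le> K"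
  shows "(\<integral>\<omega>. g (Z \<omega> $ i) * Z \<omega> $ j \<partial>M) = 0"
proof -
  define s where "s n \<omega> = sin (Z \<omega> $ j / real (Suc n)) * real (Suc n) * g (Z \<omega> $ i)" for n \<omega>
  have K0: "0 \<le> K" using g(2)[of 0] by simp
  have "(\<lambda>n. \<integral>\<omega>. s n \<omega> \<partial>M) \<longlonglongrightarrow> (\<integral>\<omega>. g (Z \<omega> $ i) * Z \<omega> $ j \<partial>M)"
  proof (rule dc[where w="\<lambda>\<omega>. K * \<bar>Z \<omega> $ j\<bar>"])
    show "integrable M (\<lambda>\<omega>. K * \<bar>Z \<omega> $ j\<bar>)" using Zint by auto
    show "(\<lambda>n. s n \<omega>) \<longlonglongrightarrow> g (Z \<omega> $ i) * Z \<omega> $ j" for \<omega>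
      unfolding s_def using tendsto_mult_right[OF sinlim, of "Z \<omega> $ j" "g (Z \<omega> $ i)"] by (simp add: mult.commute)
    show "\<bar>s n \<omega>\<bar> \<le> K * \<bar>Z \<omega> $ j\<bar>" for n \<omega>
      unfolding s_def abs_mult[of _ "g _"]
      by (rule order_trans[OF mult_mono[OF sin_scaled_bound g(2)]]) (auto simp: K0 mult.commute)
    show "(\<lambda>\<omega>. g (Z \<omega> $ i) * Z \<omega> $ j) \<in> borel_measurable M" using g by measurable
    show "s n \<in> borel_measurable M" for n unfolding s_def using g by measurable
  qed
  moreover have "(\<integral>\<omega>. s n \<omega> \<partial>M) = 0" for n
  proof -
    have e: "((1 / real (Suc n)) *\<^sub>R axis j 1) \<bullet> Z \<omega> = Z \<omega> $ j / real (Suc n)" for \<omega>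
      by (simp add: inner_axis')
    have "(\<integral>\<omega>. s n \<omega> \<partial>M) = (\<integral>\<omega>. real (Suc n) * (sin (((1 / real (Suc n)) *\<^sub>R axis j 1) \<bullet> Z \<omega>) * g (Z \<omega> $ i)) \<partial>M)"
      unfolding e s_def by (rule Bochner_Integration.integral_cong) (auto simp: mult.commute mult.left_commute)
    also have "\<dots> = real (Suc n) * (\<integral>\<omega>. sin (((1 / real (Suc n)) *\<^sub>R axis j 1) \<bullet> Z \<omega>) * g (Z \<omega> $ i) \<partial>M)"
      by (rule integral_mult_right_zero)
    also have "\<dots> = 0"
      using Fsin[OF _ g, of "(1 / real (Suc n)) *\<^sub>R axis j 1" i] ij by (simp add: axis_def)
    finally show ?thesis .
  qed
  ultimately show ?thesis by (simp add: LIMSEQ_const_iff)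
qed

lemma F2:
  fixes g :: "real \<Rightarrow> real"
  assumes ij: "i \<noteq> j" and ik: "i \<noteq> k" and jk: "j \<noteq> k"
    and g: "g \<in> borel_measurable borel" "\<And>x. \<bar>g x\<bar> \<le> K"
  shows "(\<integral>\<omega>. g (Z \<omega> $ i) * (Z \<omega> $ j * Z \<omega> $ k) \<partial>M) = 0"
proof -
  define s where "s n \<omega> = (sin (Z \<omega> $ j / real (Suc n)) * real (Suc n)) * (sin (Z \<omega> $ k / real (Suc n)) * real (Suc n)) * g (Z \<omega> $ i)" for n \<omega>
  have K0: "0 \<le> K" using g(2)[of 0] by simp
  have "(\<lambda>n. \<integral>\<omega>. s n \<omega> \<partial>M) \<longlonglongrightarrow> (\<integral>\<omega>. g (Z \<omega> $ i) * (Z \<omega> $ j * Z \<omega> $ k) \<partial>M)"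
  proof (rule dc[where w="\<lambda>\<omega>. K * ((Z \<omega> $ j)\<^sup>2 + (Z \<omega> $ k)\<^sup>2)"])
    show "integrable M (\<lambda>\<omega>. K * ((Z \<omega> $ j)\<^sup>2 + (Z \<omega> $ k)\<^sup>2))"
      by (intro integrable_mult_right Bochner_Integration.integrable_add Z2)
    show "(\<lambda>n. s n \<omega>) \<longlonglongrightarrow> g (Z \<omega> $ i) * (Z \<omega> $ j * Z \<omega> $ k)" for \<omega>
    proof -
      have "(\<lambda>n. s n \<omega>) \<longlonglongrightarrow> Z \<omega> $ j * Z \<omega> $ k * g (Z \<omega> $ i)"
        unfolding s_def by (intro tendsto_mult sinlim tendsto_const)
      then show ?thesis by (simp only: mult.commute)
    qed
    show "\<bar>s n \<omega>\<bar> \<le> K * ((Z \<omega> $ j)\<^sup>2 + (Z \<omega> $ k)\<^sup>2)" for n \<omega>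
    proof -
      have a: "\<bar>sin (Z \<omega> $ j / real (Suc n)) * real (Suc n)\<bar> \<le> \<bar>Z \<omega> $ j\<bar>"
        and b: "\<bar>sin (Z \<omega> $ k / real (Suc n)) * real (Suc n)\<bar> \<le> \<bar>Z \<omega> $ k\<bar>"
        by (rule sin_scaled_bound; simp)+
      have "\<bar>s n \<omega>\<bar> = \<bar>sin (Z \<omega> $ j / real (Suc n)) * real (Suc n)\<bar> * \<bar>sin (Z \<omega> $ k / real (Suc n)) * real (Suc n)\<bar> * \<bar>g (Z \<omega> $ i)\<bar>"
        by (simp only: s_def abs_mult)
      also have "\<dots> \<le> (\<bar>Z \<omega> $ j\<bar> * \<bar>Z \<omega> $ k\<bar>) * K"
        by (rule mult_mono[OF mult_mono[OF a b] g(2)]) auto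
      also have "\<dots> \<le> ((Z \<omega> $ j)\<^sup>2 + (Z \<omega> $ k)\<^sup>2) * K"
        by (rule mult_right_mono[OF ab K0])
      finally show ?thesis by (simp only: mult.commute)
    qed
    show "(\<lambda>\<omega>. g (Z \<omega> $ i) * (Z \<omega> $ j * Z \<omega> $ k)) \<in> borel_measurable M" using g by measurable
    show "s n \<in> borel_measurable M" for n unfolding s_def using g by measurable
  qed
  moreover have "(\<integral>\<omega>. s n \<omega> \<partial>M) = 0" for n
  proof -
    let ?m = "real (Suc n)"
    define t1 where "t1 = (1 / ?m) *\<^sub>R (axis j 1 - axis k 1 :: real^'d)"
    define t2 where "t2 = (1 / ?m) *\<^sub>R (axis j 1 + axis k 1 :: real^'d)"
    have t1i: "t1 $ i = 0" and t2i: "t2 $ i = 0" using ij ik by (auto simp: t1_def t2_def axis_def)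
    have tt: "t1 \<bullet> t1 = t2 \<bullet> t2" using axn[OF jk]
      by (simp only: t1_def t2_def inner_scaleR_left inner_scaleR_right)
    have e1: "t1 \<bullet> Z \<omega> = Z \<omega> $ j / ?m - Z \<omega> $ k / ?m" for \<omega>
      by (simp add: t1_def inner_diff_left inner_axis' divide_inverse diff_divide_distrib algebra_simps)
    have e2: "t2 \<bullet> Z \<omega> = Z \<omega> $ j / ?m + Z \<omega> $ k / ?m" for \<omega>
      by (simp add: t2_def inner_add_left inner_axis' divide_inverse algebra_simps)
    have C: "(\<integral>\<omega>. cos (t1 \<bullet> Z \<omega>) * g (Z \<omega> $ i) \<partial>M) = (\<integral>\<omega>. cos (t2 \<bullet> Z \<omega>) * g (Z \<omega> $ i) \<partial>M)"
      by (rule Fcos[OF t1i t2i tt g])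
    have "(\<integral>\<omega>. s n \<omega> \<partial>M) = (\<integral>\<omega>. (?m * ?m / 2) * (cos (t1 \<bullet> Z \<omega>) * g (Z \<omega> $ i) - cos (t2 \<bullet> Z \<omega>) * g (Z \<omega> $ i)) \<partial>M)"
      unfolding s_def e1 e2 ss by (rule refl)
    also have "\<dots> = (?m * ?m / 2) * ((\<integral>\<omega>. cos (t1 \<bullet> Z \<omega>) * g (Z \<omega> $ i) \<partial>M) - (\<integral>\<omega>. cos (t2 \<bullet> Z \<omega>) * g (Z \<omega> $ i) \<partial>M))"
      by (subst integral_mult_right_zero, subst Bochner_Integration.integral_diff)
         (auto intro!: int_cgZ[OF g])
    also have "\<dots> = 0" by (simp only: C diff_self mult_zero_right)
    finally show ?thesis .
  qed
  ultimately show ?thesis by (simp add: LIMSEQ_const_iff)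
qed

lemma lim2:
  fixes g :: "real \<Rightarrow> real"
  assumes g: "g \<in> borel_measurable borel" "\<And>x. \<bar>g x\<bar> \<le> K"
  shows "(\<lambda>n. \<integral>\<omega>. (sin (Z \<omega> $ j / (2 * real (Suc n))) * (2 * real (Suc n)))\<^sup>2 * g (Z \<omega> $ i) \<partial>M)
     \<longlonglongrightarrow> (\<integral>\<omega>. g (Z \<omega> $ i) * (Z \<omega> $ j)\<^sup>2 \<partial>M)"
proof (rule dc[where w="\<lambda>\<omega>. K * (Z \<omega> $ j)\<^sup>2"])
  have K0: "0 \<le> K" using g(2)[of 0] by simp
  show "integrable M (\<lambda>\<omega>. K * (Z \<omega> $ j)\<^sup>2)" by (intro integrable_mult_right Z2)
  show "(\<lambda>n. (sin (Z \<omega> $ j / (2 * real (Suc n))) * (2 * real (Suc n)))\<^sup>2 * g (Z \<omega> $ i)) \<longlonglongrightarrow> g (Z \<omega> $ i) * (Z \<omega> $ j)\<^sup>2" for \<omega>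
  proof -
    have "(\<lambda>n. (sin (Z \<omega> $ j / (2 * real (Suc n))) * (2 * real (Suc n)))\<^sup>2 * g (Z \<omega> $ i)) \<longlonglongrightarrow> (Z \<omega> $ j)\<^sup>2 * g (Z \<omega> $ i)"
      by (intro tendsto_mult tendsto_power sinlim2 tendsto_const)
    then show ?thesis by (simp only: mult.commute)
  qed
  show "\<bar>(sin (Z \<omega> $ j / (2 * real (Suc n))) * (2 * real (Suc n)))\<^sup>2 * g (Z \<omega> $ i)\<bar> \<le> K * (Z \<omega> $ j)\<^sup>2" for n \<omega>
  proof -
    have a: "\<bar>sin (Z \<omega> $ j / (2 * real (Suc n))) * (2 * real (Suc n))\<bar> \<le> \<bar>Z \<omega> $ j\<bar>"
      by (rule sin_scaled_bound) simp
    have b: "(sin (Z \<omega> $ j / (2 * real (Suc n))) * (2 * real (Suc n)))\<^sup>2 \<le> (Z \<omega> $ j)\<^sup>2"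
      using power_mono[OF a abs_ge_zero, of 2] by (simp only: power2_abs)
    have "\<bar>(sin (Z \<omega> $ j / (2 * real (Suc n))) * (2 * real (Suc n)))\<^sup>2 * g (Z \<omega> $ i)\<bar>
        = (sin (Z \<omega> $ j / (2 * real (Suc n))) * (2 * real (Suc n)))\<^sup>2 * \<bar>g (Z \<omega> $ i)\<bar>"
      by (simp add: abs_mult)
    also have "\<dots> \<le> (Z \<omega> $ j)\<^sup>2 * K"
      by (rule mult_mono[OF b g(2)]) auto
    finally show ?thesis by (simp only: mult.commute)
  qed
  show "(\<lambda>\<omega>. g (Z \<omega> $ i) * (Z \<omega> $ j)\<^sup>2) \<in> borel_measurable M" using g by measurable
  show "(\<lambda>\<omega>. (sin (Z \<omega> $ j / (2 * real (Suc n))) * (2 * real (Suc n)))\<^sup>2 * g (Z \<omega> $ i)) \<in> borel_measurable M" for n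
    using g by measurable
qed

lemma F3:
  fixes g :: "real \<Rightarrow> real"
  assumes ij: "i \<noteq> j" and ij': "i' \<noteq> j'"
    and g: "g \<in> borel_measurable borel" "\<And>x. \<bar>g x\<bar> \<le> K"
  shows "(\<integral>\<omega>. g (Z \<omega> $ i) * (Z \<omega> $ j)\<^sup>2 \<partial>M) = (\<integral>\<omega>. g (Z \<omega> $ i') * (Z \<omega> $ j')\<^sup>2 \<partial>M)"
proof -
  have expr: "(\<integral>\<omega>. (sin (Z \<omega> $ b / (2 * real (Suc n))) * (2 * real (Suc n)))\<^sup>2 * g (Z \<omega> $ a) \<partial>M)
      = 2 * (real (Suc n))\<^sup>2 * ((\<integral>\<omega>. g (Z \<omega> $ a) \<partial>M) - (\<integral>\<omega>. cos (((1 / real (Suc n)) *\<^sub>R axis b 1) \<bullet> Z \<omega>) * g (Z \<omega> $ a) \<partial>M))" for a b n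
  proof -
    have e: "((1 / real (Suc n)) *\<^sub>R axis b 1) \<bullet> Z \<omega> = Z \<omega> $ b / real (Suc n)" for \<omega>
      by (simp add: inner_axis')
    have "(\<integral>\<omega>. (sin (Z \<omega> $ b / (2 * real (Suc n))) * (2 * real (Suc n)))\<^sup>2 * g (Z \<omega> $ a) \<partial>M)
       = (\<integral>\<omega>. 2 * (real (Suc n))\<^sup>2 * (g (Z \<omega> $ a) - cos (((1 / real (Suc n)) *\<^sub>R axis b 1) \<bullet> Z \<omega>) * g (Z \<omega> $ a)) \<partial>M)"
      unfolding pw e by (rule Bochner_Integration.integral_cong) (auto simp: algebra_simps)
    also have "\<dots> = 2 * (real (Suc n))\<^sup>2 * ((\<integral>\<omega>. g (Z \<omega> $ a) \<partial>M) - (\<integral>\<omega>. cos (((1 / real (Suc n)) *\<^sub>R axis b 1) \<bullet> Z \<omega>) * g (Z \<omega> $ a) \<partial>M))"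
      by (subst integral_mult_right_zero, subst Bochner_Integration.integral_diff)
         (auto intro!: int_cgZ[OF g] int_gZ[OF g])
    finally show ?thesis .
  qed
  have eq: "(\<integral>\<omega>. (sin (Z \<omega> $ j / (2 * real (Suc n))) * (2 * real (Suc n)))\<^sup>2 * g (Z \<omega> $ i) \<partial>M)
      = (\<integral>\<omega>. (sin (Z \<omega> $ j' / (2 * real (Suc n))) * (2 * real (Suc n)))\<^sup>2 * g (Z \<omega> $ i') \<partial>M)" for n
  proof -
    have t: "((1 / real (Suc n)) *\<^sub>R axis j 1 :: real^'d) $ i = 0" "((1 / real (Suc n)) *\<^sub>R axis j' 1 :: real^'d) $ i' = 0"
      using ij ij' by (auto simp: axis_def)
    have tt: "((1 / real (Suc n)) *\<^sub>R axis j 1 :: real^'d) \<bullet> ((1 / real (Suc n)) *\<^sub>R axis j 1)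
         = ((1 / real (Suc n)) *\<^sub>R axis j' 1 :: real^'d) \<bullet> ((1 / real (Suc n)) *\<^sub>R axis j' 1)"
      by (simp add: inner_axis_axis)
    show ?thesis unfolding expr F4[OF g, of i i'] Fcos[OF t tt g] by (rule refl)
  qed
  show ?thesis
    using LIMSEQ_unique[OF lim2[OF g, of j i] lim2[OF g, of j' i', folded eq]] .
qed

end

context prob_space begin

lemma cdf_W: "(W::'a\<Rightarrow>real) \<in> borel_measurable M \<Longrightarrow> cdf (distr M borel W) x = measure M {\<omega>\<in>space M. W \<omega> \<le> x}"
  unfolding cdf_def by (subst measure_distr) (auto intro!: arg_cong[where f="measure M"])

lemma quant_set:
  fixes W :: "'a \<Rightarrow> real"
  assumes W: "W \<in> borel_measurable M" and p: "0 < p" "p < 1"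
  shows "{x. measure M {\<omega>\<in>space M. W \<omega> \<le> x} \<ge> p} \<noteq> {}"
    and "bdd_below {x. measure M {\<omega>\<in>space M. W \<omega> \<le> x} \<ge> p}"
proof -
  interpret D: real_distribution "distr M borel W" using W by simp
  have "\<forall>\<^sub>F x in at_top. cdf (distr M borel W) x > p"
    using order_tendstoD(1)[OF D.cdf_lim_at_top_prob p(2)] .
  then obtain N where "\<And>x. x \<ge> N \<Longrightarrow> cdf (distr M borel W) x > p"
    by (auto simp: eventually_at_top_linorder)
  then have "N \<in> {x. measure M {\<omega>\<in>space M. W \<omega> \<le> x} \<ge> p}"
    using cdf_W[OF W] by (auto intro: less_imp_le)
  then show "{x. measure M {\<omega>\<in>space M. W \<omega> \<le> x} \<ge> p} \<noteq> {}" by blast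
  have "\<forall>\<^sub>F x in at_bot. cdf (distr M borel W) x < p"
    using order_tendstoD(2)[OF D.cdf_lim_at_bot p(1)] .
  then obtain N where N: "\<And>x. x \<le> N \<Longrightarrow> cdf (distr M borel W) x < p"
    by (auto simp: eventually_at_bot_linorder)
  show "bdd_below {x. measure M {\<omega>\<in>space M. W \<omega> \<le> x} \<ge> p}"
  proof (rule bdd_belowI)
    fix x assume "x \<in> {x. measure M {\<omega>\<in>space M. W \<omega> \<le> x} \<ge> p}"
    then have "\<not> cdf (distr M borel W) x < p" using cdf_W[OF W] by auto
    then show "N \<le> x" using N by (meson linorder_not_le less_imp_le)
  qed
qed

lemma quant_below:
  fixes W :: "'a \<Rightarrow> real"
  assumes W: "W \<in> borel_measurable M" and p: "0 < p" "p < 1" and x: "x < quantile M W p"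
  shows "measure M {\<omega>\<in>space M. W \<omega> \<le> x} < p"
proof (rule ccontr)
  assume "\<not> measure M {\<omega>\<in>space M. W \<omega> \<le> x} < p"
  then have "x \<in> {x. measure M {\<omega>\<in>space M. W \<omega> \<le> x} \<ge> p}" by simp
  then have "quantile M W p \<le> x"
    unfolding quantile_def by (rule cInf_lower[OF _ quant_set(2)[OF W p]])
  then show False using x by simp
qed

lemma quant_attained:
  fixes W :: "'a \<Rightarrow> real"
  assumes W: "W \<in> borel_measurable M" and p: "0 < p" "p < 1"
  shows "p \<le> measure M {\<omega>\<in>space M. W \<omega> \<le> quantile M W p}"
proof -
  interpret D: real_distribution "distr M borel W" using W by simp
  let ?S = "{x. measure M {\<omega>\<in>space M. W \<omega> \<le> x} \<ge> p}"
  let ?q = "quantile M W p"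
  have ge: "p \<le> cdf (distr M borel W) y" if qy: "?q < y" for y
  proof -
    obtain s where s: "s \<in> ?S" "s < y"
      using cInf_lessD[OF quant_set(1)[OF W p], of y] qy unfolding quantile_def by blast
    have "p \<le> cdf (distr M borel W) s" using s cdf_W[OF W] by simp
    also have "\<dots> \<le> cdf (distr M borel W) y" using s by (intro D.cdf_nondecreasing) simp
    finally show ?thesis .
  qed
  have "(cdf (distr M borel W) \<longlongrightarrow> cdf (distr M borel W) ?q) (at_right ?q)"
    using D.cdf_is_right_cont by (simp add: continuous_within)
  then have "p \<le> cdf (distr M borel W) ?q"
    by (rule tendsto_lowerbound) (auto intro: eventually_mono[OF eventually_at_right_less] ge)
  then show ?thesis using cdf_W[OF W] by simp
qed

lemma quant_affine:
  fixes W :: "'a \<Rightarrow> real"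
  assumes W: "W \<in> borel_measurable M" and p: "0 < p" "p < 1" and b: "b > 0"
  shows "quantile M (\<lambda>\<omega>. a + b * W \<omega>) p = a + b * quantile M W p"
proof -
  let ?S = "{x. measure M {\<omega>\<in>space M. W \<omega> \<le> x} \<ge> p}"
  let ?f = "\<lambda>z. a + b * z"
  have set: "{y. measure M {\<omega>\<in>space M. a + b * W \<omega> \<le> y} \<ge> p} = ?f ` ?S"
  proof (rule set_eqI, rule iffI)
    fix y assume "y \<in> {y. measure M {\<omega>\<in>space M. a + b * W \<omega> \<le> y} \<ge> p}"
    moreover have "{\<omega>\<in>space M. a + b * W \<omega> \<le> y} = {\<omega>\<in>space M. W \<omega> \<le> (y - a) / b}"
      using b by (auto simp: field_simps)
    ultimately have "(y - a) / b \<in> ?S" by simp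
    moreover have "y = ?f ((y - a) / b)" using b by simp
    ultimately show "y \<in> ?f ` ?S" by blast
  next
    fix y assume "y \<in> ?f ` ?S"
    then obtain z where z: "z \<in> ?S" "y = a + b * z" by blast
    moreover have "{\<omega>\<in>space M. a + b * W \<omega> \<le> a + b * z} = {\<omega>\<in>space M. W \<omega> \<le> z}"
      using b by auto
    ultimately show "y \<in> {y. measure M {\<omega>\<in>space M. a + b * W \<omega> \<le> y} \<ge> p}" by simp
  qed
  have "?f (Inf ?S) = Inf (?f ` ?S)"
  proof (rule continuous_at_Inf_mono)
    show "mono ?f" using b by (auto intro!: monoI mult_left_mono)
    show "continuous (at_right (Inf ?S)) ?f" by (intro continuous_intros)
  qed (use quant_set[OF W p] in auto)
  then show ?thesis unfolding quantile_def set by simp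
qed

end

context sph begin

lemma ind_bnd: "\<bar>indicator A x\<bar> \<le> (1::real)"
  by (simp add: indicator_def)

lemma int_ind: "A \<in> sets borel \<Longrightarrow> (\<integral>\<omega>. indicator A (W \<omega>) \<partial>M) = measure M {\<omega>\<in>space M. W \<omega> \<in> A}"
  if "W \<in> borel_measurable M" for W :: "'a \<Rightarrow> real"
proof -
  assume A: "A \<in> sets borel"
  have "(\<integral>\<omega>. indicator A (W \<omega>) \<partial>M) = (\<integral>\<omega>. indicator {\<omega>\<in>space M. W \<omega> \<in> A} \<omega> \<partial>M)"
    by (rule Bochner_Integration.integral_cong) (auto simp: indicator_def)
  also have "\<dots> = measure M {\<omega>\<in>space M. W \<omega> \<in> A}"
    by (simp add: Int_absorb2 subset_iff)
  finally show ?thesis .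
qed

lemma pZ_eq: "A \<in> sets borel \<Longrightarrow> measure M {\<omega>\<in>space M. Z \<omega> $ i \<in> A} = measure M {\<omega>\<in>space M. Z \<omega> $ i' \<in> A}"
proof -
  assume A: "A \<in> sets borel"
  have "(\<integral>\<omega>. indicator A (Z \<omega> $ i) \<partial>M) = (\<integral>\<omega>. (indicator A (Z \<omega> $ i') :: real) \<partial>M)"
    by (rule F4[OF borel_measurable_indicator[OF A] ind_bnd])
  then show ?thesis using int_ind[OF Zi_meas A] by simp
qed

lemma pZ_sym: "A \<in> sets borel \<Longrightarrow> measure M {\<omega>\<in>space M. Z \<omega> $ i \<in> A} = measure M {\<omega>\<in>space M. - Z \<omega> $ i \<in> A}"
proof -
  assume A: "A \<in> sets borel"
  have "(\<integral>\<omega>. indicator A (Z \<omega> $ i) \<partial>M) = (\<integral>\<omega>. (indicator A (- Z \<omega> $ i) :: real) \<partial>M)"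
    by (rule Fsym[OF borel_measurable_indicator[OF A] ind_bnd])
  moreover have "(\<lambda>\<omega>. - Z \<omega> $ i) \<in> borel_measurable M" by measurable
  ultimately show ?thesis using int_ind[OF Zi_meas A] int_ind[of "\<lambda>\<omega>. - Z \<omega> $ i" A] A by simp
qed

lemma quant_eq: "quantile M (\<lambda>\<omega>. Z \<omega> $ i) p = quantile M (\<lambda>\<omega>. Z \<omega> $ i') p"
proof -
  have "measure M {\<omega>\<in>space M. Z \<omega> $ i \<le> x} = measure M {\<omega>\<in>space M. Z \<omega> $ i' \<le> x}" for x
    using pZ_eq[of "{..x}" i i'] by simp
  then show ?thesis unfolding quantile_def by simp
qed

lemma quant_sym:
  fixes i :: 'd and q1 q2 :: real
  assumes a: "0 < \<alpha>" "\<alpha> < 1"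
  and q1_def: "q1 = quantile M (\<lambda>\<omega>. Z \<omega> $ i) (\<alpha>/2)" and q2_def: "q2 = quantile M (\<lambda>\<omega>. Z \<omega> $ i) (1 - \<alpha>/2)"
  shows "q2 \<le> - q1" and "measure M {\<omega>\<in>space M. q2 < Z \<omega> $ i \<and> Z \<omega> $ i < - q1} = 0"
proof -
  have p1: "0 < \<alpha>/2" "\<alpha>/2 < 1" and p2: "0 < 1 - \<alpha>/2" "1 - \<alpha>/2 < 1" using a by auto
  let ?P = "\<lambda>A. measure M {\<omega>\<in>space M. Z \<omega> $ i \<in> A}"
  have compl: "measure M {\<omega>\<in>space M. x < Z \<omega> $ i} = 1 - measure M {\<omega>\<in>space M. Z \<omega> $ i \<le> x}" for x
    using prob_neg[of "\<lambda>\<omega>. Z \<omega> $ i \<le> x"] by (simp add: not_le)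
  have sym_lt: "measure M {\<omega>\<in>space M. Z \<omega> $ i < x} = measure M {\<omega>\<in>space M. - x < Z \<omega> $ i}" for x
    using pZ_sym[of "{..<x}"] by (simp add: minus_less_iff)
  show le: "q2 \<le> - q1"
  proof (rule ccontr)
    assume "\<not> q2 \<le> - q1"
    define x where "x = (q1 - q2) / 2"
    have x1: "x < q1" using \<open>\<not> q2 \<le> - q1\<close> unfolding x_def by (simp add: field_simps)
    have x2: "- x < q2" using \<open>\<not> q2 \<le> - q1\<close> unfolding x_def by (simp add: field_simps)
    have A: "measure M {\<omega>\<in>space M. Z \<omega> $ i \<le> x} < \<alpha>/2"
      using quant_below[OF Zi_meas p1] x1 unfolding q1_def by blast
    have B: "measure M {\<omega>\<in>space M. Z \<omega> $ i \<le> - x} < 1 - \<alpha>/2"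
      using quant_below[OF Zi_meas p2] x2 unfolding q2_def by blast
    have "measure M {\<omega>\<in>space M. Z \<omega> $ i < x} \<le> measure M {\<omega>\<in>space M. Z \<omega> $ i \<le> x}"
      by (rule finite_measure_mono) auto
    also have "measure M {\<omega>\<in>space M. Z \<omega> $ i < x} = 1 - measure M {\<omega>\<in>space M. Z \<omega> $ i \<le> - x}"
      using sym_lt compl by simp
    finally show False using A B by simp
  qed
  show "measure M {\<omega>\<in>space M. q2 < Z \<omega> $ i \<and> Z \<omega> $ i < - q1} = 0"
  proof (cases "q2 < - q1")
    case False
    then have e: "{\<omega>\<in>space M. q2 < Z \<omega> $ i \<and> Z \<omega> $ i < - q1} = {}" by auto
    show ?thesis unfolding e by (rule measure_empty)
  next
    case True
    have un: "{\<omega>\<in>space M. Z \<omega> $ i < - q1} = {\<omega>\<in>space M. Z \<omega> $ i \<le> q2} \<union> {\<omega>\<in>space M. q2 < Z \<omega> $ i \<and> Z \<omega> $ i < - q1}"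
      using True by auto
    have "measure M {\<omega>\<in>space M. Z \<omega> $ i < - q1} = measure M {\<omega>\<in>space M. Z \<omega> $ i \<le> q2} + measure M {\<omega>\<in>space M. q2 < Z \<omega> $ i \<and> Z \<omega> $ i < - q1}"
      unfolding un by (rule finite_measure_Union) auto
    moreover have "measure M {\<omega>\<in>space M. Z \<omega> $ i < - q1} = 1 - measure M {\<omega>\<in>space M. Z \<omega> $ i \<le> q1}"
      using sym_lt[of "- q1"] compl[of q1] by simp
    moreover have "\<alpha>/2 \<le> measure M {\<omega>\<in>space M. Z \<omega> $ i \<le> q1}"
      unfolding q1_def by (rule quant_attained[OF Zi_meas p1])
    moreover have "1 - \<alpha>/2 \<le> measure M {\<omega>\<in>space M. Z \<omega> $ i \<le> q2}"
      unfolding q2_def by (rule quant_attained[OF Zi_meas p2])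
    ultimately have "measure M {\<omega>\<in>space M. q2 < Z \<omega> $ i \<and> Z \<omega> $ i < - q1} \<le> 0" by linarith
    then show ?thesis using measure_nonneg[of M] by (meson antisym)
  qed
qed

end

definition dg :: "('n::finite \<Rightarrow> real) \<Rightarrow> real^'n^'n" where
  "dg d = (\<chi> i j. if i = j then d i else 0)"

lemma dg_mult: "dg d *v x = (\<chi> i. d i * x $ i)"
  by (simp add: dg_def matrix_vector_mult_def vec_eq_iff if_distrib if_distribR cong: if_cong)

lemma det_dg: "det (dg d) = (\<Prod>i\<in>UNIV. d i)"
  by (subst det_diagonal) (auto simp: dg_def)

lemma frob_dg: "frob_norm (dg d) = sqrt (\<Sum>i\<in>UNIV. (d i)\<^sup>2)"
  unfolding frob_norm_def dg_def
  by (simp add: if_distrib if_distribR cong: if_cong)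

lemma op_dg:
  fixes d :: "'n::finite \<Rightarrow> real"
  shows "op_norm (dg d) = Max (range (\<lambda>i. \<bar>d i\<bar>))"
proof (rule antisym)
  let ?M = "Max (range (\<lambda>i. \<bar>d i\<bar>))"
  have le: "\<bar>d i\<bar> \<le> ?M" for i by (rule Max_ge) auto
  have M0: "0 \<le> ?M" using le[of undefined] by linarith
  show "op_norm (dg d) \<le> ?M"
    unfolding op_norm_def
  proof (rule onorm_le)
    fix x :: "real^'n"
    have "(dg d *v x) \<bullet> (dg d *v x) = (\<Sum>i\<in>UNIV. (d i)\<^sup>2 * (x $ i)\<^sup>2)"
      by (simp add: dg_mult inner_vec_def power2_eq_square algebra_simps)
    also have "\<dots> \<le> (\<Sum>i\<in>UNIV. ?M\<^sup>2 * (x $ i)\<^sup>2)"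
    proof (rule sum_mono)
      fix i
      have "(d i)\<^sup>2 \<le> ?M\<^sup>2" using le[of i] by (metis abs_ge_zero power2_abs power_mono)
      then show "(d i)\<^sup>2 * (x $ i)\<^sup>2 \<le> ?M\<^sup>2 * (x $ i)\<^sup>2" by (rule mult_right_mono) simp
    qed
    also have "\<dots> = ?M\<^sup>2 * (\<Sum>i\<in>UNIV. (x $ i)\<^sup>2)"
      by (rule sum_distrib_left[symmetric])
    also have "\<dots> = (?M * norm x)\<^sup>2"
    proof -
      have "(\<Sum>i\<in>UNIV. (x $ i)\<^sup>2) = x \<bullet> x" by (simp add: inner_vec_def power2_eq_square)
      then have "(\<Sum>i\<in>UNIV. (x $ i)\<^sup>2) = (norm x)\<^sup>2" by (simp only: power2_norm_eq_inner)
      then show ?thesis by (simp only: power_mult_distrib)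
    qed
    finally have "(norm (dg d *v x))\<^sup>2 \<le> (?M * norm x)\<^sup>2"
      by (simp add: power2_norm_eq_inner)
    then show "norm (dg d *v x) \<le> ?M * norm x"
      by (rule power2_le_imp_le[OF _ mult_nonneg_nonneg[OF M0 norm_ge_zero]])
  qed
  obtain j where j: "?M = \<bar>d j\<bar>"
  proof -
    have "?M \<in> range (\<lambda>i. \<bar>d i\<bar>)" by (rule Max_in) auto
    then show ?thesis using that by blast
  qed
  have "norm (dg d *v axis j 1) / norm (axis j (1::real)) \<le> op_norm (dg d)"
    unfolding op_norm_def by (rule le_onorm[OF matrix_vector_mul_bounded_linear])
  moreover have "dg d *v axis j 1 = axis j (d j)"
    by (simp add: dg_mult axis_def vec_eq_iff)
  moreover have "axis j (d j) = d j *\<^sub>R axis j (1::real)" by (simp add: vec_eq_iff axis_def)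
  ultimately show "?M \<le> op_norm (dg d)" using j by (simp add: norm_axis_1)
qed

lemma sum_if_one:
  fixes f g :: "'n::finite \<Rightarrow> real"
  shows "(\<Sum>j\<in>UNIV. if j = i then f j else g j) = (\<Sum>j\<in>UNIV. g j) + (f i - g i)"
proof -
  have "(\<Sum>j\<in>UNIV. if j = i then f j else g j) = (\<Sum>j\<in>UNIV. g j + (if j = i then f i - g i else 0))"
    by (rule sum.cong) auto
  also have "\<dots> = (\<Sum>j\<in>UNIV. g j) + (\<Sum>j\<in>UNIV. (if j = i then f i - g i else 0))"
    by (rule sum.distrib)
  also have "(\<Sum>j\<in>UNIV. (if j = i then f i - g i else 0)) = f i - g i"
    by (simp only: sum.delta finite UNIV_I if_True)
  finally show ?thesis .
qed

lemma prod_if_one: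
  fixes a b :: real
  shows "(\<Prod>j\<in>(UNIV::'n::finite set). if j = i then b else a) = b * a ^ (CARD('n) - 1)"
proof -
  have "(\<Prod>j\<in>(UNIV::'n set). if j = i then b else a) = (if i = i then b else a) * (\<Prod>j\<in>UNIV - {i}. if j = i then b else a)"
    by (rule prod.remove) auto
  also have "(\<Prod>j\<in>UNIV - {i}. if j = i then b else a) = (\<Prod>j\<in>UNIV - {i}. a)"
    by (rule prod.cong) auto
  also have "\<dots> = a ^ (CARD('n) - 1)"
    by (simp add: card_Diff_singleton)
  finally show ?thesis by simp
qed

lemma final_alg:
  fixes lam :: "'d::{finite,linorder} \<Rightarrow> real" and L :: "'d::{finite,linorder} \<Rightarrow> real^'d::{finite,linorder}^'d::{finite,linorder}"
  assumes mono: "\<forall>i j. i \<le> j \<longrightarrow> lam j \<le> lam i" and pos: "\<forall>i. lam i > 0"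
    and b0: "0 \<le> b" and ba: "b \<le> a"
    and L: "L = (\<lambda>i. dg (\<lambda>j. lam j * (if j = i then b else a)))"
  shows "(\<forall>i. frob_norm (L (Min UNIV)) \<le> frob_norm (L i) \<and> frob_norm (L i) \<le> frob_norm (L (Max UNIV)))
          \<and> (\<forall>i j. det (L i) = det (L j))
          \<and> (\<forall>i. op_norm (L (Min UNIV)) \<le> op_norm (L i))
          \<and> (\<forall>i j. i \<noteq> Min UNIV \<longrightarrow> j \<noteq> Min UNIV \<longrightarrow> op_norm (L i) = op_norm (L j))"
proof -
  let ?m = "Min (UNIV :: 'd set)" and ?M = "Max (UNIV :: 'd set)"
  have lm: "lam i \<le> lam ?m" for i using mono by (simp add: Min_le)
  have lM: "lam ?M \<le> lam i" for i using mono by (simp add: Max_ge)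
  have a0: "0 \<le> a" using b0 ba by linarith
  define S where "S = (\<Sum>j\<in>(UNIV::'d set). (lam j * a)\<^sup>2)"
  have fr: "frob_norm (L i) = sqrt (S + (lam i)\<^sup>2 * (b\<^sup>2 - a\<^sup>2))" for i
  proof -
    have "(\<Sum>j\<in>UNIV. (lam j * (if j = i then b else a))\<^sup>2) = (\<Sum>j\<in>UNIV. if j = i then (lam j * b)\<^sup>2 else (lam j * a)\<^sup>2)"
      by (rule sum.cong) auto
    also have "\<dots> = S + ((lam i * b)\<^sup>2 - (lam i * a)\<^sup>2)"
      unfolding S_def by (rule sum_if_one)
    finally show ?thesis unfolding L frob_dg by (simp add: power_mult_distrib algebra_simps)
  qed
  have ab2: "b\<^sup>2 - a\<^sup>2 \<le> 0" using b0 ba by (simp add: power_mono)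
  have frmono: "frob_norm (L i) \<le> frob_norm (L j)" if "lam j \<le> lam i" for i j
  proof -
    have "(lam j)\<^sup>2 \<le> (lam i)\<^sup>2" using that pos by (simp add: power_mono less_imp_le)
    then have "(lam i)\<^sup>2 * (b\<^sup>2 - a\<^sup>2) \<le> (lam j)\<^sup>2 * (b\<^sup>2 - a\<^sup>2)"
      using ab2 by (rule mult_right_mono_neg)
    then show ?thesis unfolding fr by simp
  qed
  have P1: "\<forall>i. frob_norm (L ?m) \<le> frob_norm (L i) \<and> frob_norm (L i) \<le> frob_norm (L ?M)"
    using frmono lm lM by blast
  have dt: "det (L i) = (\<Prod>j\<in>UNIV. lam j) * (b * a ^ (CARD('d) - 1))" for i
    unfolding L det_dg prod.distrib prod_if_one by (rule refl)
  have P2: "\<forall>i j. det (L i) = det (L j)" by (simp add: dt)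
  have ent: "\<bar>lam j * (if j = i then b else a)\<bar> \<le> lam ?m * a" for i j
  proof -
    have "\<bar>lam j * (if j = i then b else a)\<bar> = lam j * (if j = i then b else a)"
      using pos b0 a0 by (simp add: less_imp_le)
    also have "\<dots> \<le> lam ?m * a"
    proof (cases "j = i")
      case True
      then show ?thesis using lm[of j] pos b0 a0 ba by (simp add: mult_mono less_imp_le)
    next
      case False
      then show ?thesis using lm[of j] a0 by (simp add: mult_right_mono)
    qed
    finally show ?thesis .
  qed
  have opm: "op_norm (L i) \<le> lam ?m * a" for i
    unfolding L op_dg by (rule Max.boundedI) (auto intro: ent)
  have opn: "op_norm (L i) = lam ?m * a" if "i \<noteq> ?m" for i
  proof -
    have "lam ?m * a \<in> range (\<lambda>j. \<bar>lam j * (if j = i then b else a)\<bar>)"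
      using that pos a0 by (auto intro!: image_eqI[where x="?m"] simp: less_imp_le)
    then have "lam ?m * a \<le> op_norm (L i)"
      unfolding L op_dg by (intro Max_ge) auto
    then show ?thesis using opm[of i] by simp
  qed
  have P3: "\<forall>i. op_norm (L ?m) \<le> op_norm (L i)"
  proof
    fix i show "op_norm (L ?m) \<le> op_norm (L i)"
      using opm[of ?m] opn[of i] by (cases "i = ?m") auto
  qed
  have P4: "\<forall>i j. i \<noteq> ?m \<longrightarrow> j \<noteq> ?m \<longrightarrow> op_norm (L i) = op_norm (L j)"
    using opn by auto
  show ?thesis using P1 P2 P3 P4 by blast
qed

locale sphJ = sph M Z \<phi> for M :: "'a measure" and Z :: "'a \<Rightarrow> real^'d" and \<phi> +
  fixes l u :: real and i0 j0 :: 'd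
  assumes ij0: "i0 \<noteq> j0"
  and pos: "measure M {\<omega>\<in>space M. Z \<omega> $ i0 \<in> {l..u}} > 0"
begin

definition "J = {l..u}"
definition "p0 = measure M {\<omega>\<in>space M. Z \<omega> $ i0 \<in> J}"
definition "cc = (\<integral>\<omega>. indicator J (Z \<omega> $ i0) * Z \<omega> $ i0 \<partial>M) / p0"
definition "bb = (\<integral>\<omega>. indicator J (Z \<omega> $ i0) * (Z \<omega> $ i0 - cc)\<^sup>2 \<partial>M) / p0"
definition "aa = (\<integral>\<omega>. indicator J (Z \<omega> $ i0) * (Z \<omega> $ j0)\<^sup>2 \<partial>M) / p0"
definition "R = \<bar>l\<bar> + \<bar>u\<bar>"

lemma p0_pos: "p0 > 0" using pos by (simp add: p0_def J_def)

lemma J_borel[measurable]: "J \<in> sets borel" by (simp add: J_def)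

lemma J_bound: "x \<in> J \<Longrightarrow> \<bar>x\<bar> \<le> R" by (auto simp: J_def R_def)

lemma R0: "0 \<le> R" by (simp add: R_def)

lemma ind_J_meas[measurable]: "(\<lambda>x. indicator J x :: real) \<in> borel_measurable borel" by simp

lemma g1_b: "\<bar>indicator J x * x\<bar> \<le> R"
  using J_bound[of x] R0 by (auto simp: indicator_def)
lemma g2_b: "\<bar>indicator J x * (x - cc)\<^sup>2\<bar> \<le> (R + \<bar>cc\<bar>)\<^sup>2"
proof (cases "x \<in> J")
  case True
  then have "\<bar>x - cc\<bar> \<le> R + \<bar>cc\<bar>" using J_bound[of x] by linarith
  then have "(x - cc)\<^sup>2 \<le> (R + \<bar>cc\<bar>)\<^sup>2" by (metis abs_ge_zero power2_abs power_mono)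
  then show ?thesis using True by simp
qed simp
lemma g3_b: "\<bar>indicator J x * (x - cc)\<bar> \<le> R + \<bar>cc\<bar>"
  using J_bound[of x] R0 by (auto simp: indicator_def)
lemma g4_b: "\<bar>indicator J x * x\<^sup>2\<bar> \<le> R\<^sup>2"
proof (cases "x \<in> J")
  case True
  then have "x\<^sup>2 \<le> R\<^sup>2" using J_bound[of x] by (metis abs_ge_zero power2_abs power_mono)
  then show ?thesis using True by simp
qed simp

lemma mE: "measure M {\<omega>\<in>space M. Z \<omega> $ i \<in> J} = p0"
  unfolding p0_def by (rule pZ_eq) simp

lemma int_E: "(\<integral>\<omega>. indicator {\<omega>\<in>space M. Z \<omega> $ i \<in> J} \<omega> * f \<omega> \<partial>M) = (\<integral>\<omega>. indicator J (Z \<omega> $ i) * f \<omega> \<partial>M)"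
  by (rule Bochner_Integration.integral_cong) (auto simp: indicator_def)

lemma mean_Z: "(\<integral>\<omega>. indicator J (Z \<omega> $ i) * Z \<omega> $ j \<partial>M) = (if j = i then cc * p0 else 0)"
proof (cases "j = i")
  case True
  have "(\<integral>\<omega>. indicator J (Z \<omega> $ i) * Z \<omega> $ i \<partial>M) = (\<integral>\<omega>. indicator J (Z \<omega> $ i0) * Z \<omega> $ i0 \<partial>M)"
    by (rule F4[OF _ g1_b]) simp
  then show ?thesis using True p0_pos by (simp add: cc_def)
next
  case False
  then show ?thesis using F1[of i j "indicator J" 1] by (simp add: ind_bnd)
qed

lemma I_entry:
  "(\<integral>\<omega>. indicator J (Z \<omega> $ i) * ((Z \<omega> $ j - (if j = i then cc else 0)) * (Z \<omega> $ k - (if k = i then cc else 0))) \<partial>M)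
   = (if j = k then (if j = i then bb * p0 else aa * p0) else 0)"
proof -
  consider "j = k" "j = i" | "j = k" "j \<noteq> i" | "j \<noteq> k" "j = i" | "j \<noteq> k" "k = i" | "j \<noteq> k" "j \<noteq> i" "k \<noteq> i"
    by blast
  then show ?thesis
  proof cases
    case 1
    have "(\<integral>\<omega>. indicator J (Z \<omega> $ i) * (Z \<omega> $ i - cc)\<^sup>2 \<partial>M) = (\<integral>\<omega>. indicator J (Z \<omega> $ i0) * (Z \<omega> $ i0 - cc)\<^sup>2 \<partial>M)"
      by (rule F4[OF _ g2_b]) simp
    then show ?thesis using 1 p0_pos by (simp add: bb_def power2_eq_square)
  next
    case 2
    have "(\<integral>\<omega>. indicator J (Z \<omega> $ i) * (Z \<omega> $ j)\<^sup>2 \<partial>M) = (\<integral>\<omega>. indicator J (Z \<omega> $ i0) * (Z \<omega> $ j0)\<^sup>2 \<partial>M)"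
      by (rule F3[OF _ ij0 _ ind_bnd]) (use 2 in auto)
    then show ?thesis using 2 p0_pos by (simp add: aa_def power2_eq_square)
  next
    case 3
    have "(\<integral>\<omega>. indicator J (Z \<omega> $ i) * (Z \<omega> $ i - cc) * Z \<omega> $ k \<partial>M) = 0"
      by (rule F1[OF _ _ g3_b]) (use 3 in auto)
    then show ?thesis using 3 by (simp add: mult.assoc)
  next
    case 4
    have "(\<integral>\<omega>. indicator J (Z \<omega> $ i) * (Z \<omega> $ i - cc) * Z \<omega> $ j \<partial>M) = 0"
      by (rule F1[OF _ _ g3_b]) (use 4 in auto)
    moreover have "(\<integral>\<omega>. indicator J (Z \<omega> $ i) * ((Z \<omega> $ j - (if j = i then cc else 0)) * (Z \<omega> $ k - (if k = i then cc else 0))) \<partial>M)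
       = (\<integral>\<omega>. indicator J (Z \<omega> $ i) * (Z \<omega> $ i - cc) * Z \<omega> $ j \<partial>M)"
      using 4 by (intro Bochner_Integration.integral_cong) (auto simp: mult_ac)
    ultimately show ?thesis using 4 by simp
  next
    case 5
    have "(\<integral>\<omega>. indicator J (Z \<omega> $ i) * (Z \<omega> $ j * Z \<omega> $ k) \<partial>M) = 0"
      by (rule F2[OF _ _ _ _ ind_bnd]) (use 5 in auto)
    then show ?thesis using 5 by simp
  qed
qed

lemma int_indZ: "(\<integral>\<omega>. indicator J (Z \<omega> $ i) \<partial>M) = p0"
  using int_ind[OF Zi_meas J_borel, of i] mE[of i] by simp

lemma integrable_indZ: "integrable M (\<lambda>\<omega>. indicator J (Z \<omega> $ i) * Z \<omega> $ j)"
  by (rule Bochner_Integration.integrable_bound[OF Zint]) (auto simp: indicator_def)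

lemma cov_diag:
  fixes \<sigma> :: "'d \<Rightarrow> real" and \<nu> :: "real^'d" and Y :: "'a \<Rightarrow> real^'d"
  assumes \<sigma>: "\<forall>k. \<sigma> k > 0" and Y: "\<forall>\<omega>. Y \<omega> = (\<chi> k. \<nu> $ k + \<sigma> k * Z \<omega> $ k)"
  shows "cond_cov_matrix M {\<omega>\<in>space M. Z \<omega> $ i \<in> J} Y = dg (\<lambda>j. (\<sigma> j)\<^sup>2 * (if j = i then bb else aa))"
proof -
  let ?E = "{\<omega>\<in>space M. Z \<omega> $ i \<in> J}"
  have Yj: "Y \<omega> $ j = \<nu> $ j + \<sigma> j * Z \<omega> $ j" for \<omega> j using Y by simp
  have mean: "cond_exp_event M ?E (\<lambda>\<omega>. Y \<omega> $ j) = \<nu> $ j + \<sigma> j * (if j = i then cc else 0)" for j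
  proof -
    have "(\<integral>\<omega>. indicator ?E \<omega> * Y \<omega> $ j \<partial>M) = (\<integral>\<omega>. indicator J (Z \<omega> $ i) * (\<nu> $ j + \<sigma> j * Z \<omega> $ j) \<partial>M)"
      unfolding int_E Yj by (rule refl)
    also have "\<dots> = (\<integral>\<omega>. \<nu> $ j * indicator J (Z \<omega> $ i) + \<sigma> j * (indicator J (Z \<omega> $ i) * Z \<omega> $ j) \<partial>M)"
      by (rule Bochner_Integration.integral_cong) (auto simp: algebra_simps)
    also have "\<dots> = \<nu> $ j * (\<integral>\<omega>. indicator J (Z \<omega> $ i) \<partial>M) + \<sigma> j * (\<integral>\<omega>. indicator J (Z \<omega> $ i) * Z \<omega> $ j \<partial>M)"
      by (subst Bochner_Integration.integral_add)
         (auto intro!: integrable_mult_right integrable_indZ int_gZ[OF _ ind_bnd])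
    also have "\<dots> = (\<nu> $ j + \<sigma> j * (if j = i then cc else 0)) * p0"
      unfolding int_indZ mean_Z by (simp add: algebra_simps)
    finally show ?thesis unfolding cond_exp_event_def mE using p0_pos by simp
  qed
  show ?thesis
  proof (simp only: vec_eq_iff, intro allI)
    fix j k
    have "cond_cov_matrix M ?E Y $ j $ k
       = (\<integral>\<omega>. indicator ?E \<omega> * ((Y \<omega> $ j - (\<nu> $ j + \<sigma> j * (if j = i then cc else 0))) * (Y \<omega> $ k - (\<nu> $ k + \<sigma> k * (if k = i then cc else 0)))) \<partial>M) / p0"
      unfolding cond_cov_matrix_def cond_exp_event_def[of M ?E "\<lambda>\<omega>. (_ \<omega>) * (_ \<omega>)"] mean mE by simp
    also have "(\<integral>\<omega>. indicator ?E \<omega> * ((Y \<omega> $ j - (\<nu> $ j + \<sigma> j * (if j = i then cc else 0))) * (Y \<omega> $ k - (\<nu> $ k + \<sigma> k * (if k = i then cc else 0)))) \<partial>M)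
       = (\<integral>\<omega>. (\<sigma> j * \<sigma> k) * (indicator J (Z \<omega> $ i) * ((Z \<omega> $ j - (if j = i then cc else 0)) * (Z \<omega> $ k - (if k = i then cc else 0)))) \<partial>M)"
      unfolding int_E Yj by (rule Bochner_Integration.integral_cong) (auto simp: algebra_simps)
    also have "\<dots> = (\<sigma> j * \<sigma> k) * (if j = k then (if j = i then bb * p0 else aa * p0) else 0)"
      unfolding integral_mult_right_zero I_entry by (rule refl)
    finally show "cond_cov_matrix M ?E Y $ j $ k = dg (\<lambda>j. (\<sigma> j)\<^sup>2 * (if j = i then bb else aa)) $ j $ k"
      using p0_pos by (auto simp: dg_def power2_eq_square)
  qed
qed

lemma bb_nonneg: "0 \<le> bb"
  unfolding bb_def using p0_pos
  by (intro divide_nonneg_pos integral_nonneg_AE) (auto simp: indicator_def)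

lemma bb_le_aa:
  assumes Jb: "\<forall>x\<in>J. x\<^sup>2 \<le> Rq" and AEo: "AE \<omega> in M. Z \<omega> $ j0 \<notin> J \<longrightarrow> Rq \<le> (Z \<omega> $ j0)\<^sup>2"
  shows "bb \<le> aa"
proof -
  define S2 where "S2 = (\<integral>\<omega>. indicator J (Z \<omega> $ i0) * (Z \<omega> $ i0)\<^sup>2 \<partial>M)"
  have i1: "integrable M (\<lambda>\<omega>. indicator J (Z \<omega> $ i0) * (Z \<omega> $ i0)\<^sup>2)" by (rule int_gZ[OF _ g4_b]) simp
  have i2: "integrable M (\<lambda>\<omega>. indicator J (Z \<omega> $ i0) * Z \<omega> $ i0)" by (rule int_gZ[OF _ g1_b]) simp
  have i3: "integrable M (\<lambda>\<omega>. indicator J (Z \<omega> $ i) :: real)" for i by (rule int_gZ[OF _ ind_bnd]) simp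
  have "(\<integral>\<omega>. indicator J (Z \<omega> $ i0) * (Z \<omega> $ i0 - cc)\<^sup>2 \<partial>M)
      = (\<integral>\<omega>. indicator J (Z \<omega> $ i0) * (Z \<omega> $ i0)\<^sup>2 - (2 * cc) * (indicator J (Z \<omega> $ i0) * Z \<omega> $ i0) + cc\<^sup>2 * indicator J (Z \<omega> $ i0) \<partial>M)"
    by (rule Bochner_Integration.integral_cong) (auto simp: power2_eq_square algebra_simps)
  also have "\<dots> = S2 - (2 * cc) * (\<integral>\<omega>. indicator J (Z \<omega> $ i0) * Z \<omega> $ i0 \<partial>M) + cc\<^sup>2 * (\<integral>\<omega>. indicator J (Z \<omega> $ i0) \<partial>M)"
    unfolding S2_def using i1 i2 i3
    by (simp add: Bochner_Integration.integral_add Bochner_Integration.integral_diff)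
  also have "\<dots> = S2 - cc\<^sup>2 * p0"
    unfolding int_indZ mean_Z by (simp add: power2_eq_square algebra_simps)
  finally have b1: "bb * p0 \<le> S2"
    using p0_pos unfolding bb_def by (simp add: mult_nonneg_nonneg)
  have "S2 = (\<integral>\<omega>. indicator J (Z \<omega> $ j0) * (Z \<omega> $ j0)\<^sup>2 \<partial>M)"
    unfolding S2_def by (rule F4[OF _ g4_b]) simp
  also have "\<dots> = (\<integral>\<omega>. indicator J (Z \<omega> $ j0) * (Z \<omega> $ j0)\<^sup>2 + Rq * (indicator J (Z \<omega> $ i0) - indicator J (Z \<omega> $ j0)) \<partial>M)"
  proof -
    have "(\<integral>\<omega>. Rq * (indicator J (Z \<omega> $ i0) - indicator J (Z \<omega> $ j0)) \<partial>M) = Rq * (p0 - p0)"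
      using i3 by (simp add: Bochner_Integration.integral_diff int_indZ)
    moreover have "integrable M (\<lambda>\<omega>. indicator J (Z \<omega> $ j0) * (Z \<omega> $ j0)\<^sup>2)" by (rule int_gZ[OF _ g4_b]) simp
    ultimately show ?thesis using i3
      by (subst Bochner_Integration.integral_add) auto
  qed
  also have "\<dots> \<le> (\<integral>\<omega>. indicator J (Z \<omega> $ i0) * (Z \<omega> $ j0)\<^sup>2 \<partial>M)"
  proof (rule integral_mono_AE)
    show "integrable M (\<lambda>\<omega>. indicator J (Z \<omega> $ j0) * (Z \<omega> $ j0)\<^sup>2 + Rq * (indicator J (Z \<omega> $ i0) - indicator J (Z \<omega> $ j0)))"
      using i3 by (intro Bochner_Integration.integrable_add integrable_mult_right Bochner_Integration.integrable_diff int_gZ[OF _ g4_b]) auto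
    show "integrable M (\<lambda>\<omega>. indicator J (Z \<omega> $ i0) * (Z \<omega> $ j0)\<^sup>2)"
      by (rule Bochner_Integration.integrable_bound[OF Z2]) (auto simp: indicator_def)
    show "AE \<omega> in M. indicator J (Z \<omega> $ j0) * (Z \<omega> $ j0)\<^sup>2 + Rq * (indicator J (Z \<omega> $ i0) - indicator J (Z \<omega> $ j0))
        \<le> indicator J (Z \<omega> $ i0) * (Z \<omega> $ j0)\<^sup>2"
      using AEo
    proof (rule AE_mp, intro AE_I2 impI)
      fix \<omega> assume h: "Z \<omega> $ j0 \<notin> J \<longrightarrow> Rq \<le> (Z \<omega> $ j0)\<^sup>2"
      show "indicator J (Z \<omega> $ j0) * (Z \<omega> $ j0)\<^sup>2 + Rq * (indicator J (Z \<omega> $ i0) - indicator J (Z \<omega> $ j0))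
        \<le> indicator J (Z \<omega> $ i0) * (Z \<omega> $ j0)\<^sup>2"
        using h Jb by (cases "Z \<omega> $ i0 \<in> J"; cases "Z \<omega> $ j0 \<in> J") auto
    qed
  qed
  also have "\<dots> = aa * p0" unfolding aa_def using p0_pos by simp
  finally show ?thesis using b1 p0_pos by (meson mult_le_cancel_right_pos order_trans)
qed

end

lemma mv_inner_transpose: "(A *v x) \<bullet> y = x \<bullet> (transpose A *v y)" for A :: "real^'n^'m"
  using dot_lmul_matrix[of x "transpose A" y] by (simp add: vector_transpose_matrix)

lemma orth_inner:
  assumes "orthogonal_matrix (V :: real^'n^'n)"
  shows "(V *v x) \<bullet> (V *v y) = x \<bullet> y"
  using assms unfolding mv_inner_transpose matrix_vector_mul_assoc orthogonal_matrix_def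
  by (simp add: matrix_vector_mul_lid)

lemma orth_norm:
  assumes "orthogonal_matrix (V :: real^'n^'n)"
  shows "norm (V *v x) = norm x"
  using orth_inner[OF assms, of x x] by (simp add: norm_eq_sqrt_inner)

lemma char_Z:
  fixes M :: "'a measure" and X :: "'a \<Rightarrow> real^'d" and V :: "real^'d^'d" and lam :: "'d \<Rightarrow> real"
    and \<mu> :: "real^'d" and \<phi> :: "real \<Rightarrow> complex" and \<sigma> :: "'d \<Rightarrow> real"
  assumes P: "prob_space M" and Xm: "X \<in> borel_measurable M"
    and ell: "elliptical M X \<mu> \<Sigma> \<phi>"
    and V: "orthogonal_matrix V"
    and S: "\<Sigma> = V ** (\<chi> i j. if i = j then lam i else 0) ** transpose V"
    and \<sigma>: "\<And>k. \<sigma> k > 0" "\<And>k. (\<sigma> k)\<^sup>2 = lam k"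
  shows "(\<integral>\<omega>. iexp (t \<bullet> (\<chi> k. ((transpose V *v X \<omega>) $ k - (transpose V *v \<mu>) $ k) / \<sigma> k)) \<partial>M) = \<phi> (t \<bullet> t)"
proof -
  interpret prob_space M by fact
  define s where "s = (\<chi> k. t $ k / \<sigma> k)"
  define \<nu> where "\<nu> = transpose V *v \<mu>"
  have e1: "t \<bullet> (\<chi> k. ((transpose V *v X \<omega>) $ k - \<nu> $ k) / \<sigma> k) = (V *v s) \<bullet> X \<omega> - s \<bullet> \<nu>" for \<omega>
  proof -
    have "t \<bullet> (\<chi> k. ((transpose V *v X \<omega>) $ k - \<nu> $ k) / \<sigma> k) = s \<bullet> (transpose V *v X \<omega>) - s \<bullet> \<nu>"
      by (simp add: s_def inner_vec_def sum_subtractf[symmetric] field_simps) (simp add: diff_divide_distrib)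
    also have "s \<bullet> (transpose V *v X \<omega>) = (V *v s) \<bullet> X \<omega>"
      by (simp add: mv_inner_transpose)
    finally show ?thesis .
  qed
  have e2: "(V *v s) \<bullet> \<mu> = s \<bullet> \<nu>" by (simp add: mv_inner_transpose \<nu>_def)
  have e3: "(V *v s) \<bullet> (\<Sigma> *v (V *v s)) = t \<bullet> t"
  proof -
    have VtV: "transpose V ** V = mat 1" using V by (simp add: orthogonal_matrix_def)
    have SV: "\<Sigma> ** V = V ** dg lam"
      unfolding S dg_def[symmetric] by (simp add: matrix_mul_assoc[symmetric] VtV matrix_mul_rid)
    have "\<Sigma> *v (V *v s) = V *v (dg lam *v s)"
      by (simp only: matrix_vector_mul_assoc SV)
    then have "(V *v s) \<bullet> (\<Sigma> *v (V *v s)) = s \<bullet> (dg lam *v s)"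
      by (simp add: orth_inner[OF V])
    also have "\<dots> = (\<Sum>k\<in>UNIV. lam k * (t $ k / \<sigma> k)\<^sup>2)"
      by (simp add: dg_mult inner_vec_def s_def power2_eq_square mult_ac)
    also have "\<dots> = (\<Sum>k\<in>UNIV. t $ k * t $ k)"
    proof (rule sum.cong[OF refl])
      fix k
      show "lam k * (t $ k / \<sigma> k)\<^sup>2 = t $ k * t $ k"
        using \<sigma>(1)[of k] unfolding \<sigma>(2)[of k, symmetric] by (simp add: power2_eq_square field_simps)
    qed
    also have "\<dots> = t \<bullet> t" by (simp add: inner_vec_def)
    finally show ?thesis .
  qed
  have "(\<integral>\<omega>. iexp (t \<bullet> (\<chi> k. ((transpose V *v X \<omega>) $ k - \<nu> $ k) / \<sigma> k)) \<partial>M)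
      = (\<integral>\<omega>. iexp ((V *v s) \<bullet> X \<omega>) * iexp (- (s \<bullet> \<nu>)) \<partial>M)"
    unfolding e1 by (rule Bochner_Integration.integral_cong[OF refl]) (simp add: exp_add[symmetric] algebra_simps)
  also have "\<dots> = (\<integral>\<omega>. iexp ((V *v s) \<bullet> X \<omega>) \<partial>M) * iexp (- (s \<bullet> \<nu>))"
    by (rule integral_mult_left_zero)
  also have "(\<integral>\<omega>. iexp ((V *v s) \<bullet> X \<omega>) \<partial>M) = cis ((V *v s) \<bullet> \<mu>) * \<phi> ((V *v s) \<bullet> (\<Sigma> *v (V *v s)))"
    using ell unfolding elliptical_def by (simp add: cis_conv_exp)
  finally show ?thesis
    unfolding e2 e3 \<nu>_def[symmetric] by (simp add: cis_conv_exp exp_add[symmetric] algebra_simps)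
qed

lemma vec_comp_meas: "f \<in> borel_measurable M \<Longrightarrow> (\<lambda>x. f x $ i) \<in> borel_measurable M" for f :: "'a \<Rightarrow> real^'n"
  using measurable_compose[of f M borel "\<lambda>x. x $ i" borel]
  by (simp add: borel_measurable_continuous_onI continuous_on_component continuous_on_id)

theorem theorem9:
  fixes M :: "'a measure"
    and X :: "'a \<Rightarrow> real^('d::{finite,linorder})"
    and \<mu> :: "real^('d::{finite,linorder})" and \<Sigma> V :: "real^('d::{finite,linorder})^('d::{finite,linorder})" and lam :: "('d::{finite,linorder}) \<Rightarrow> real"
    and \<phi> :: "real \<Rightarrow> complex" and \<alpha> :: real
  assumes "prob_space M"
    and "CARD('d) \<ge> 2"
    and "X \<in> borel_measurable M"
    and "integrable M (\<lambda>\<omega>. (norm (X \<omega>))\<^sup>2)"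
    and "elliptical M X \<mu> \<Sigma> \<phi>"
    and "cov_matrix M X = \<Sigma>"
    and "\<forall>x. x \<noteq> 0 \<longrightarrow> x \<bullet> (\<Sigma> *v x) > 0"
    and "orthogonal_matrix V"
    and "\<Sigma> = V ** (\<chi> i j. if i = j then lam i else 0) ** transpose V"
    and "\<forall>i j. i \<le> j \<longrightarrow> lam j \<le> lam i"
    and "\<forall>i. lam i > 0"
    and "0 < \<alpha>" and "\<alpha> < 1"
    and "\<forall>i. measure M {\<omega> \<in> space M. (transpose V *v X \<omega>) $ i
              \<in> central_interval M (\<lambda>\<omega>. (transpose V *v X \<omega>) $ i) \<alpha>} > 0"
  shows "let Y = (\<lambda>\<omega>. transpose V *v X \<omega>);
             L = (\<lambda>i. cond_cov_matrix M
                    {\<omega> \<in> space M. Y \<omega> $ i \<in> central_interval M (\<lambda>\<omega>. Y \<omega> $ i) \<alpha>} Y)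
         in (\<forall>i. frob_norm (L (Min UNIV)) \<le> frob_norm (L i) \<and> frob_norm (L i) \<le> frob_norm (L (Max UNIV)))
          \<and> (\<forall>i j. det (L i) = det (L j))
          \<and> (\<forall>i. op_norm (L (Min UNIV)) \<le> op_norm (L i))
          \<and> (\<forall>i j. i \<noteq> Min UNIV \<longrightarrow> j \<noteq> Min UNIV \<longrightarrow> op_norm (L i) = op_norm (L j))"
proof -
  interpret P: prob_space M by fact
  define \<sigma> where "\<sigma> = (\<lambda>k. sqrt (lam k))"
  have \<sigma>pos: "\<And>k. \<sigma> k > 0" using assms(11) by (simp add: \<sigma>_def)
  have \<sigma>sq: "\<And>k. (\<sigma> k)\<^sup>2 = lam k" using assms(11) by (simp add: \<sigma>_def less_imp_le)
  define \<nu> where "\<nu> = transpose V *v \<mu>"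
  define Y where "Y = (\<lambda>\<omega>. transpose V *v X \<omega>)"
  define Z where "Z = (\<lambda>\<omega>. \<chi> k. (Y \<omega> $ k - \<nu> $ k) / \<sigma> k)"
  have YZ: "\<forall>\<omega>. Y \<omega> = (\<chi> k. \<nu> $ k + \<sigma> k * Z \<omega> $ k)"
  proof (intro allI)
    fix \<omega>
    have "\<sigma> k * ((Y \<omega> $ k - \<nu> $ k) / \<sigma> k) = Y \<omega> $ k - \<nu> $ k" for k
      using \<sigma>pos[of k] by simp
    then show "Y \<omega> = (\<chi> k. \<nu> $ k + \<sigma> k * Z \<omega> $ k)"
      by (simp add: Z_def vec_eq_iff)
  qed
  have Ym: "Y \<in> borel_measurable M"
    unfolding Y_def
    by (rule measurable_compose[OF assms(3)])
       (intro borel_measurable_continuous_onI linear_continuous_on matrix_vector_mul_bounded_linear)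
  have Zm: "Z \<in> borel_measurable M"
  proof -
    have "(\<lambda>y. \<chi> k. (y $ k - \<nu> $ k) / \<sigma> k) \<in> borel_measurable borel"
      using \<sigma>pos by (intro borel_measurable_continuous_onI continuous_on_vec_lambda continuous_intros) (auto simp: less_imp_neq[symmetric])
    from measurable_compose[OF Ym this] show ?thesis by (simp add: Z_def)
  qed
  have Z2: "integrable M (\<lambda>\<omega>. (Z \<omega> $ j)\<^sup>2)" for j
  proof (rule Bochner_Integration.integrable_bound)
    show "integrable M (\<lambda>\<omega>. (2 / (\<sigma> j)\<^sup>2) * ((norm (X \<omega>))\<^sup>2 + (\<nu> $ j)\<^sup>2))"
      using assms(4) by (intro integrable_mult_right Bochner_Integration.integrable_add) auto
    show "(\<lambda>\<omega>. (Z \<omega> $ j)\<^sup>2) \<in> borel_measurable M" by (intro borel_measurable_power vec_comp_meas[OF Zm])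
    show "AE \<omega> in M. norm ((Z \<omega> $ j)\<^sup>2) \<le> norm ((2 / (\<sigma> j)\<^sup>2) * ((norm (X \<omega>))\<^sup>2 + (\<nu> $ j)\<^sup>2))"
    proof (rule AE_I2)
      fix \<omega>
      have nY: "norm (Y \<omega>) = norm (X \<omega>)"
        unfolding Y_def by (rule orth_norm) (simp add: assms(8) orthogonal_matrix_transpose)
      have "(Y \<omega> $ j)\<^sup>2 \<le> (norm (Y \<omega>))\<^sup>2"
        using component_le_norm_cart[of "Y \<omega>" j] by (metis abs_ge_zero power2_abs power_mono)
      then have yb: "(Y \<omega> $ j)\<^sup>2 \<le> (norm (X \<omega>))\<^sup>2" using nY by simp
      have "(Y \<omega> $ j - \<nu> $ j)\<^sup>2 \<le> 2 * ((Y \<omega> $ j)\<^sup>2 + (\<nu> $ j)\<^sup>2)"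
        using sum_squares_ge_zero[of "Y \<omega> $ j + \<nu> $ j" 0] by (simp add: power2_eq_square algebra_simps)
      also have "\<dots> \<le> 2 * ((norm (X \<omega>))\<^sup>2 + (\<nu> $ j)\<^sup>2)" using yb by simp
      finally have yy: "(Y \<omega> $ j - \<nu> $ j)\<^sup>2 \<le> 2 * ((norm (X \<omega>))\<^sup>2 + (\<nu> $ j)\<^sup>2)" .
      have "(Z \<omega> $ j)\<^sup>2 = (Y \<omega> $ j - \<nu> $ j)\<^sup>2 / (\<sigma> j)\<^sup>2" by (simp add: Z_def power_divide)
      also have "\<dots> \<le> (2 * ((norm (X \<omega>))\<^sup>2 + (\<nu> $ j)\<^sup>2)) / (\<sigma> j)\<^sup>2"
        by (rule divide_right_mono[OF yy]) simp
      finally have "(Z \<omega> $ j)\<^sup>2 \<le> (2 / (\<sigma> j)\<^sup>2) * ((norm (X \<omega>))\<^sup>2 + (\<nu> $ j)\<^sup>2)"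
        by simp
      then show "norm ((Z \<omega> $ j)\<^sup>2) \<le> norm ((2 / (\<sigma> j)\<^sup>2) * ((norm (X \<omega>))\<^sup>2 + (\<nu> $ j)\<^sup>2))"
        by simp
    qed
  qed
  have chZ: "(\<integral>\<omega>. iexp (t \<bullet> Z \<omega>) \<partial>M) = \<phi> (t \<bullet> t)" for t
    unfolding Z_def Y_def \<nu>_def
    by (rule char_Z[OF assms(1) assms(3) assms(5) assms(8) assms(9) \<sigma>pos \<sigma>sq])
  interpret S: sph M Z \<phi>
    by unfold_locales (use Zm chZ Z2 in auto)
  define i0 where "i0 = Min (UNIV :: 'd set)"
  obtain j0 :: 'd where j0: "j0 \<noteq> i0"
  proof -
    have "\<exists>j::'d. j \<noteq> i0"
    proof (rule ccontr)
      assume "\<not> (\<exists>j::'d. j \<noteq> i0)"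
      then have U: "(UNIV :: 'd set) = {i0}" by auto
      have "CARD('d) = 1" by (subst U) simp
      then show False using assms(2) by simp
    qed
    then show ?thesis using that by blast
  qed
  define q1 where "q1 = quantile M (\<lambda>\<omega>. Z \<omega> $ i0) (\<alpha>/2)"
  define q2 where "q2 = quantile M (\<lambda>\<omega>. Z \<omega> $ i0) (1 - \<alpha>/2)"
  have pa: "0 < \<alpha>/2" "\<alpha>/2 < 1" "0 < 1 - \<alpha>/2" "1 - \<alpha>/2 < 1" using assms(12,13) by auto
  have ev: "{\<omega>\<in>space M. Y \<omega> $ i \<in> central_interval M (\<lambda>\<omega>. Y \<omega> $ i) \<alpha>} = {\<omega>\<in>space M. Z \<omega> $ i \<in> {q1..q2}}" for i
  proof -
    have fY: "(\<lambda>\<omega>. Y \<omega> $ i) = (\<lambda>\<omega>. \<nu> $ i + \<sigma> i * Z \<omega> $ i)" using YZ by auto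
    have ci: "central_interval M (\<lambda>\<omega>. Y \<omega> $ i) \<alpha> = {\<nu> $ i + \<sigma> i * q1 .. \<nu> $ i + \<sigma> i * q2}"
      unfolding central_interval_def fY q1_def q2_def
      using P.quant_affine[OF S.Zi_meas[of i] pa(1,2) \<sigma>pos[of i], where a="\<nu> $ i"]
            P.quant_affine[OF S.Zi_meas[of i] pa(3,4) \<sigma>pos[of i], where a="\<nu> $ i"]
            S.quant_eq[of i _ i0] by simp
    have "Y \<omega> $ i \<in> {\<nu> $ i + \<sigma> i * q1 .. \<nu> $ i + \<sigma> i * q2} \<longleftrightarrow> Z \<omega> $ i \<in> {q1..q2}" for \<omega>
      using \<sigma>pos[of i] YZ by simp
    then show ?thesis unfolding ci by auto
  qed
  have posi0: "measure M {\<omega>\<in>space M. Z \<omega> $ i0 \<in> {q1..q2}} > 0"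
  proof -
    have "0 < measure M {\<omega>\<in>space M. Y \<omega> $ i0 \<in> central_interval M (\<lambda>\<omega>. Y \<omega> $ i0) \<alpha>}"
      using assms(14) unfolding Y_def by blast
    then show ?thesis unfolding ev .
  qed
  interpret SJ: sphJ M Z \<phi> q1 q2 i0 j0
    by unfold_locales (use j0 posi0 in auto)
  have L_eq: "cond_cov_matrix M {\<omega>\<in>space M. Y \<omega> $ i \<in> central_interval M (\<lambda>\<omega>. Y \<omega> $ i) \<alpha>} Y
      = dg (\<lambda>j. lam j * (if j = i then SJ.bb else SJ.aa))" for i
    unfolding ev SJ.J_def[symmetric] SJ.cov_diag[OF allI[OF \<sigma>pos] YZ] \<sigma>sq by (rule refl)
  have b0: "0 \<le> SJ.bb" by (rule SJ.bb_nonneg)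
  have q12: "q1 \<le> q2"
  proof (rule ccontr)
    assume "\<not> q1 \<le> q2"
    then have e: "{\<omega>\<in>space M. Z \<omega> $ i0 \<in> {q1..q2}} = {}" by auto
    show False using posi0 unfolding e by simp
  qed
  have qs: "q2 \<le> - q1"
    by (rule S.quant_sym(1)[OF assms(12,13) q1_def q2_def])
  have q10: "q1 \<le> 0" using q12 qs by linarith
  have ba: "SJ.bb \<le> SJ.aa"
  proof (rule SJ.bb_le_aa[where Rq="q1\<^sup>2"])
    show "\<forall>x\<in>SJ.J. x\<^sup>2 \<le> q1\<^sup>2"
    proof
      fix x assume "x \<in> SJ.J"
      then have "\<bar>x\<bar> \<le> \<bar>q1\<bar>" using qs q10 by (auto simp: SJ.J_def)
      then show "x\<^sup>2 \<le> q1\<^sup>2" by (metis abs_ge_zero power2_abs power_mono)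
    qed
    have q1j: "q1 = quantile M (\<lambda>\<omega>. Z \<omega> $ j0) (\<alpha>/2)" unfolding q1_def by (rule S.quant_eq)
    have q2j: "q2 = quantile M (\<lambda>\<omega>. Z \<omega> $ j0) (1 - \<alpha>/2)" unfolding q2_def by (rule S.quant_eq)
    have null: "measure M {\<omega>\<in>space M. q2 < Z \<omega> $ j0 \<and> Z \<omega> $ j0 < - q1} = 0"
      by (rule S.quant_sym(2)[OF assms(12,13) q1j q2j])
    have "AE \<omega> in M. \<omega> \<notin> {\<omega>\<in>space M. q2 < Z \<omega> $ j0 \<and> Z \<omega> $ j0 < - q1}"
      using null P.prob_eq_0[of "{\<omega>\<in>space M. q2 < Z \<omega> $ j0 \<and> Z \<omega> $ j0 < - q1}"]
      by (simp add: S.Zi_meas)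
    then show "AE \<omega> in M. Z \<omega> $ j0 \<notin> SJ.J \<longrightarrow> q1\<^sup>2 \<le> (Z \<omega> $ j0)\<^sup>2"
    proof (rule AE_mp, intro AE_I2 impI)
      fix \<omega> assume \<omega>: "\<omega> \<in> space M" and nn: "\<omega> \<notin> {\<omega>\<in>space M. q2 < Z \<omega> $ j0 \<and> Z \<omega> $ j0 < - q1}"
        and nJ: "Z \<omega> $ j0 \<notin> SJ.J"
      have "\<bar>q1\<bar> \<le> \<bar>Z \<omega> $ j0\<bar>" using \<omega> nn nJ q10 by (auto simp: SJ.J_def)
      then show "q1\<^sup>2 \<le> (Z \<omega> $ j0)\<^sup>2" by (metis abs_ge_zero power2_abs power_mono)
    qed
  qed
  show ?thesis
    unfolding Let_def Y_def[symmetric] L_eq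
    by (rule final_alg[OF assms(10) assms(11) b0 ba refl])
qed

end
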